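(* Under the absolute loss $\ell(\hat y,y)=|\hat y-y|$: (i) for all integers $d,K\ge1$ and $T$ with $8Kd\log(2Kd)\le T$, there exist an instance space $\mathcal X$ and a class $\mathcal H\subset\{0,1\}^{\mathcal X}$ with $\mathsf{VC}(\mathcal H)\le d$ such that $\tilde r_T(\mathcal H,\mathsf U_K^1)\ge\sqrt{KdT/64}$; (ii) there is an absolute constant $c>0$ such that for the class of threshold functions $\mathcal H=\{x\mapsto 1\{x\ge a\}:a\in[0,1]\}$ on $\mathcal X=[0,1]$ and all $1\le K\le T$, $\tilde r_T(\mathcal H,\mathsf U_K^1)\ge c\sqrt{KT}$.
   Context: Predictions lie in $[0,1]$, labels in $\{0,1\}$. For a loss $\ell$, a class $\mathcal H$ of functions $\mathcal X\to[0,1]$ and a class $\mathsf P$ of distributions on $\mathcal X^T$, $$\tilde r_T(\mathcal H,\mathsf P)=\inf_{\phi^T}\sup_{\boldsymbol\nu^T\in\mathsf P}\mathbb E_{\mathbf x^T\sim\boldsymbol\nu^T}\Big[\sup_{y^T\in\{0,1\}^T}\Big(\sum_{t=1}^T\ell(\phi_t(\mathbf x^t,y^{t-1}),y_t)-\inf_{h\in\mathcal H}\sum_{t=1}^T\ell(h(\mathbf x_t),y_t)\Big)\Big],$$ with $\phi_t:\mathcal X^t\times\{0,1\}^{t-1}\to[0,1]$ deterministic prediction rules. For a process $X^T$ let $\nu_t(\cdot\mid X^{t-1})$ be the conditional law of $X_t$ given $X_1,\dots,X_{t-1}$. $\mathsf U_K^1$ is the class of all processes on $\mathcal X^T$ for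 which almost surely the set $\{\nu_t(\cdot\mid X^{t-1}):t\in[T]\}$ has at most $K$ distinct elements. *)

theory Defs
  imports "HOL-Probability.Probability"
begin

text \<open>Hypothesis classes are sets of real-valued functions on the instance type;
  the instance space itself is a measurable space M with carrier X = space M.
  Time indices are 0-based: a length-T sequence is a function on {..<T}.\<close>

definition binary_class :: "'a set \<Rightarrow> ('a \<Rightarrow> real) set \<Rightarrow> bool" where
  "binary_class X H \<longleftrightarrow> (\<forall>h\<in>H. \<forall>x\<in>X. h x \<in> {0, 1})"

definition shatters :: "('a \<Rightarrow> real) set \<Rightarrow> 'a set \<Rightarrow> bool" where
  "shatters H S \<longleftrightarrow> (\<forall>S'\<subseteq>S. \<exists>h\<in>H. \<forall>x\<in>S. (h x = 1 \<longleftrightarrow> x \<in> S'))"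

definition VC_le :: "'a set \<Rightarrow> ('a \<Rightarrow> real) set \<Rightarrow> nat \<Rightarrow> bool" where
  "VC_le X H d \<longleftrightarrow> (\<forall>S. S \<subseteq> X \<and> finite S \<and> shatters H S \<longrightarrow> card S \<le> d)"

definition seq_space :: "'a measure \<Rightarrow> nat \<Rightarrow> (nat \<Rightarrow> 'a) measure" where
  "seq_space M T = PiM {..<T} (\<lambda>_. M)"

text \<open>kappa t is (a version of) the conditional law of X_t given X_0..X_{t-1} under nu.\<close>
definition conditional_laws ::
  "'a measure \<Rightarrow> nat \<Rightarrow> (nat \<Rightarrow> 'a) measure \<Rightarrow> (nat \<Rightarrow> (nat \<Rightarrow> 'a) \<Rightarrow> 'a measure) \<Rightarrow> bool" where
  "conditional_laws M T \<nu> \<kappa> \<longleftrightarrow>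
     (\<forall>t<T. \<kappa> t \<in> seq_space M t \<rightarrow>\<^sub>M prob_algebra M \<and>
        (\<forall>A\<in>sets (seq_space M t). \<forall>B\<in>sets M.
           emeasure \<nu> {x\<in>space \<nu>. restrict x {..<t} \<in> A \<and> x t \<in> B}
           = (\<integral>\<^sup>+ x. indicator A (restrict x {..<t}) * emeasure (\<kappa> t (restrict x {..<t})) B \<partial>\<nu>)))"

definition U_K1 :: "'a measure \<Rightarrow> nat \<Rightarrow> nat \<Rightarrow> (nat \<Rightarrow> 'a) measure set" where
  "U_K1 M T K = {\<nu>. prob_space \<nu> \<and> sets \<nu> = sets (seq_space M T) \<and>
     (\<exists>\<kappa>. conditional_laws M T \<nu> \<kappa> \<and>
        (AE x in \<nu>. card ((\<lambda>t. \<kappa> t (restrict x {..<t})) ` {..<T}) \<le> K))}"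

text \<open>Deterministic prediction rules: phi t x y is the prediction at time t, it is
  only ever applied to x restricted to {..t} and y restricted to {..<t}.\<close>
definition learners :: "(nat \<Rightarrow> (nat \<Rightarrow> 'a) \<Rightarrow> (nat \<Rightarrow> real) \<Rightarrow> real) set" where
  "learners = {\<phi>. \<forall>t x y. \<phi> t x y \<in> {0..1}}"

definition abs_regret ::
  "('a \<Rightarrow> real) set \<Rightarrow> nat \<Rightarrow> (nat \<Rightarrow> (nat \<Rightarrow> 'a) \<Rightarrow> (nat \<Rightarrow> real) \<Rightarrow> real)
    \<Rightarrow> (nat \<Rightarrow> 'a) \<Rightarrow> (nat \<Rightarrow> real) \<Rightarrow> ereal" where
  "abs_regret H T \<phi> x y =
     ereal (\<Sum>t<T. \<bar>\<phi> t (restrict x {..t}) (restrict y {..<t}) - y t\<bar>)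
     - (INF h\<in>H. ereal (\<Sum>t<T. \<bar>h (x t) - y t\<bar>))"

definition worst_regret ::
  "('a \<Rightarrow> real) set \<Rightarrow> nat \<Rightarrow> (nat \<Rightarrow> (nat \<Rightarrow> 'a) \<Rightarrow> (nat \<Rightarrow> real) \<Rightarrow> real)
    \<Rightarrow> (nat \<Rightarrow> 'a) \<Rightarrow> ereal" where
  "worst_regret H T \<phi> x = (SUP y\<in>PiE {..<T} (\<lambda>_. {0, 1}). abs_regret H T \<phi> x y)"

definition minimax_regret :: "'a measure \<Rightarrow> ('a \<Rightarrow> real) set \<Rightarrow> nat \<Rightarrow> nat \<Rightarrow> ennreal" where
  "minimax_regret M H T K =
     (INF \<phi>\<in>learners. SUP \<nu>\<in>U_K1 M T K. \<integral>\<^sup>+ x. e2ennreal (worst_regret H T \<phi> x) \<partial>\<nu>)"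

definition threshold_class :: "(real \<Rightarrow> real) set" where
  "threshold_class = {(\<lambda>x. if a \<le> x then 1 else 0) | a. a \<in> {0..1}}"

end

theory Submission
  imports Defs
begin


lemma sum_PiE_group:
  fixes g :: "('i \<Rightarrow> 'b) \<Rightarrow> real"
  assumes "finite I" "a \<in> I" "finite S"
  shows "(\<Sum>y\<in>PiE I (\<lambda>_. S). g y) = (\<Sum>u\<in>S. \<Sum>y\<in>{y\<in>PiE I (\<lambda>_. S). y a = u}. g y)"
  using assms
  by (subst sum.group[symmetric, of "PiE I (\<lambda>_. S)" S "\<lambda>y. y a" g]) (auto simp: finite_PiE)

lemma sum_PiE_shift:
  fixes f :: "('i \<Rightarrow> 'b) \<Rightarrow> real"
  assumes "finite I" "a \<in> I" "finite S" "s \<in> S" "u \<in> S"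
  shows "(\<Sum>y\<in>{y\<in>PiE I (\<lambda>_. S). y a = u}. f (y(a:=s))) = (\<Sum>y\<in>{y\<in>PiE I (\<lambda>_. S). y a = s}. f y)"
proof (rule sum.reindex_bij_witness[of _ "\<lambda>z. z(a:=u)" "\<lambda>y. y(a:=s)"])
qed (use assms in \<open>auto simp: PiE_iff extensional_def\<close>)

lemma rerand:
  fixes f :: "('i \<Rightarrow> 'b) \<Rightarrow> real"
  assumes "finite I" "a \<in> I" "finite S" "S \<noteq> {}"
  shows "(\<Sum>y\<in>PiE I (\<lambda>_. S). f y) = (\<Sum>y\<in>PiE I (\<lambda>_. S). \<Sum>s\<in>S. f (y(a:=s))) / card S"
proof -
  let ?Y = "PiE I (\<lambda>_. S)"
  have "(\<Sum>y\<in>?Y. \<Sum>s\<in>S. f (y(a:=s))) = (\<Sum>s\<in>S. \<Sum>y\<in>?Y. f (y(a:=s)))"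
    by (rule sum.swap)
  also have "\<dots> = (\<Sum>s\<in>S. \<Sum>u\<in>S. \<Sum>y\<in>{y\<in>?Y. y a = s}. f y)"
    apply (rule sum.cong[OF refl])
    apply (subst sum_PiE_group[OF assms(1,2,3)])
    using sum_PiE_shift[OF assms(1,2,3)] by auto
  also have "\<dots> = card S * (\<Sum>s\<in>S. \<Sum>y\<in>{y\<in>?Y. y a = s}. f y)"
    by (simp add: sum_distrib_left)
  also have "\<dots> = card S * (\<Sum>y\<in>?Y. f y)"
    using sum_PiE_group[OF assms(1,2,3), of f] by simp
  finally show ?thesis using assms by (simp add: card_gt_0_iff)
qed



definition eps :: "('i \<Rightarrow> real) \<Rightarrow> 'i \<Rightarrow> real" where "eps y t = 2 * y t - 1"
definition SS :: "'i set \<Rightarrow> ('i \<Rightarrow> real) \<Rightarrow> real" where "SS C y = (\<Sum>t\<in>C. eps y t)"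

lemma rerand_eps:
  fixes h :: "real \<Rightarrow> real \<Rightarrow> real"
  assumes "finite I" "a \<in> I" "a \<notin> C"
  shows "(\<Sum>y\<in>PiE I (\<lambda>_. {0,1}). h (eps y a) (SS C y))
       = (\<Sum>y\<in>PiE I (\<lambda>_. {0,1}). (h (-1) (SS C y) + h 1 (SS C y))) / 2"
proof -
  have "(\<Sum>y\<in>PiE I (\<lambda>_. {0,1::real}). h (eps y a) (SS C y))
     = (\<Sum>y\<in>PiE I (\<lambda>_. {0,1::real}). \<Sum>s\<in>{0,1}. h (eps (y(a:=s)) a) (SS C (y(a:=s)))) / card {0,1::real}"
    by (rule rerand) (use assms in auto)
  moreover have "\<And>y s. SS C (y(a:=s)) = SS C y"
    unfolding SS_def eps_def using assms(3) by (intro sum.cong) auto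
  ultimately show ?thesis by (simp add: eps_def)
qed

lemma moments:
  assumes "finite I" "C \<subseteq> I"
  shows "(\<Sum>y\<in>PiE I (\<lambda>_. {0,1}). SS C y) = 0
       \<and> (\<Sum>y\<in>PiE I (\<lambda>_. {0,1}). (SS C y)^2) = real (card (PiE I (\<lambda>_. {0,1::real}))) * real (card C)
       \<and> (\<Sum>y\<in>PiE I (\<lambda>_. {0,1}). (SS C y)^3) = 0
       \<and> (\<Sum>y\<in>PiE I (\<lambda>_. {0,1}). (SS C y)^4) = real (card (PiE I (\<lambda>_. {0,1::real}))) * (3 * (real (card C))^2 - 2 * real (card C))"
proof -
  have fC: "finite C" using assms finite_subset by blast
  show ?thesis using fC assms(2)
  proof (induction C rule: finite_induct)
    case empty
    then show ?case by (simp add: SS_def)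
  next
    case (insert a C)
    let ?Y = "PiE I (\<lambda>_. {0,1::real})"
    have aI: "a \<in> I" and CI: "C \<subseteq> I" using insert by auto
    have IH: "(\<Sum>y\<in>?Y. SS C y) = 0" "(\<Sum>y\<in>?Y. (SS C y)^2) = real (card ?Y) * real (card C)"
      "(\<Sum>y\<in>?Y. (SS C y)^3) = 0" "(\<Sum>y\<in>?Y. (SS C y)^4) = real (card ?Y) * (3 * (real (card C))^2 - 2 * real (card C))"
      using insert.IH[OF CI] by auto
    have SSi: "\<And>y. SS (insert a C) y = eps y a + SS C y"
      unfolding SS_def using insert by simp
    have R: "\<And>k. (\<Sum>y\<in>?Y. (SS (insert a C) y)^k) = (\<Sum>y\<in>?Y. ((-1 + SS C y)^k + (1 + SS C y)^k)) / 2"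
      unfolding SSi using rerand_eps[OF assms(1) aI insert(2), of "\<lambda>e s. (e + s)^_"] by simp
    have e1: "\<And>s::real. (-1 + s)^1 + (1+s)^1 = 2 * s" by simp
    have e2: "\<And>s::real. (-1 + s)^2 + (1+s)^2 = 2 * s^2 + 2" by (simp add: power2_eq_square algebra_simps)
    have e3: "\<And>s::real. (-1 + s)^3 + (1+s)^3 = 2 * s^3 + 6 * s" by (simp add: power3_eq_cube algebra_simps)
    have e4: "\<And>s::real. (-1 + s)^4 + (1+s)^4 = 2 * s^4 + 12 * s^2 + 2"
      by (simp add: power4_eq_xxxx power2_eq_square algebra_simps)
    have c: "real (card (insert a C)) = real (card C) + 1" using insert by simp
    have s1: "(\<Sum>y\<in>?Y. (SS (insert a C) y)^1) = (\<Sum>y\<in>?Y. SS C y)"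
      using R[of 1] unfolding e1 by (simp add: sum_distrib_left[symmetric])
    have s2: "(\<Sum>y\<in>?Y. (SS (insert a C) y)^2) = (\<Sum>y\<in>?Y. (SS C y)^2) + card ?Y"
      using R[of 2] unfolding e2 by (simp add: sum.distrib sum_distrib_left[symmetric])
    have s3: "(\<Sum>y\<in>?Y. (SS (insert a C) y)^3) = (\<Sum>y\<in>?Y. (SS C y)^3) + 3 * (\<Sum>y\<in>?Y. SS C y)"
      using R[of 3] unfolding e3 by (simp add: sum.distrib sum_distrib_left[symmetric])
    have s4: "(\<Sum>y\<in>?Y. (SS (insert a C) y)^4) = (\<Sum>y\<in>?Y. (SS C y)^4) + 6 * (\<Sum>y\<in>?Y. (SS C y)^2) + card ?Y"
      using R[of 4] unfolding e4 by (simp add: sum.distrib sum_distrib_left[symmetric])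
    show ?case
      using s1 s2 s3 s4 IH unfolding c
      by (simp add: algebra_simps power2_eq_square)
  qed
qed

lemma abs_poly_bound0:
  fixes u a :: real
  assumes "a \<ge> 0" "u \<ge> 0"
  shows "u \<ge> a * u^2 - (4 * a^3 / 27) * u^4"
proof -
  let ?v = "a * u"
  have v0: "?v \<ge> 0" using assms by simp
  have key: "1 - ?v + (4/27) * ?v^3 = (4/27) * (?v - 3/2)^2 * (?v + 3)"
    by (simp add: power2_eq_square power3_eq_cube field_simps)
  have "1 - ?v + (4/27) * ?v^3 \<ge> 0" unfolding key using v0 by (intro mult_nonneg_nonneg) auto
  then have "u * (1 - ?v + (4/27) * ?v^3) \<ge> 0" using assms by simp
  then show ?thesis
    by (simp add: power2_eq_square power3_eq_cube power4_eq_xxxx algebra_simps)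
qed

lemma abs_poly_bound:
  fixes x a :: real
  assumes "a \<ge> 0"
  shows "\<bar>x\<bar> \<ge> a * x^2 - (4 * a^3 / 27) * x^4"
proof -
  have "x^2 = \<bar>x\<bar>^2" "x^4 = \<bar>x\<bar>^4" by (simp_all add: power_even_abs)
  then show ?thesis using abs_poly_bound0[OF assms, of "\<bar>x\<bar>"] by simp
qed

lemma abs_SS_bound:
  fixes a :: real
  assumes "finite I" "C \<subseteq> I" "a \<ge> 0"
  shows "(\<Sum>y\<in>PiE I (\<lambda>_. {0,1}). \<bar>SS C y\<bar>) \<ge>
     real (card (PiE I (\<lambda>_. {0,1::real}))) * (a * real (card C) - (4 * a^3 / 27) * (3 * (real (card C))^2 - 2 * real (card C)))"
proof -
  let ?Y = "PiE I (\<lambda>_. {0,1::real})"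
  have "(\<Sum>y\<in>?Y. \<bar>SS C y\<bar>) \<ge> (\<Sum>y\<in>?Y. a * (SS C y)^2 - (4 * a^3 / 27) * (SS C y)^4)"
    by (rule sum_mono) (rule abs_poly_bound[OF assms(3)])
  also have "(\<Sum>y\<in>?Y. a * (SS C y)^2 - (4 * a^3 / 27) * (SS C y)^4)
     = a * (\<Sum>y\<in>?Y. (SS C y)^2) - (4 * a^3 / 27) * (\<Sum>y\<in>?Y. (SS C y)^4)"
    by (simp add: sum_subtractf sum_distrib_left)
  finally show ?thesis using moments[OF assms(1,2)] by (simp add: algebra_simps)
qed



definition ncell :: "'i set \<Rightarrow> ('i \<Rightarrow> nat) \<Rightarrow> nat \<Rightarrow> real" where
  "ncell C w i = real (card {t\<in>C. w t = i})"

lemma ncell_insert: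
  assumes "finite C" "a \<notin> C"
  shows "ncell (insert a C) w i = (if w a = i then 1 else 0) + ncell C w i"
proof -
  have "{t\<in>insert a C. w t = i} = (if w a = i then insert a {t\<in>C. w t = i} else {t\<in>C. w t = i})"
    by auto
  then show ?thesis unfolding ncell_def using assms by auto
qed

lemma ncell_upd:
  assumes "a \<notin> C"
  shows "ncell C (w(a:=u)) i = ncell C w i"
  unfolding ncell_def using assms by (intro arg_cong[where f="\<lambda>A. real (card A)"]) auto

lemma cell_moments:
  assumes "finite I" "C \<subseteq> I" "i < d"
  shows "(\<Sum>w\<in>PiE I (\<lambda>_. {..<d}). ncell C w i) = real (card (PiE I (\<lambda>_. {..<d}))) * real (card C) / d
       \<and> (\<Sum>w\<in>PiE I (\<lambda>_. {..<d}). (ncell C w i)^2) = real (card (PiE I (\<lambda>_. {..<d})))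
            * (real (card C) / d + real (card C) * (real (card C) - 1) / d^2)"
proof -
  have fC: "finite C" using assms finite_subset by blast
  have d0: "d > 0" using assms by simp
  show ?thesis using fC assms(2)
  proof (induction C rule: finite_induct)
    case empty
    then show ?case by (simp add: ncell_def)
  next
    case (insert a C)
    let ?W = "PiE I (\<lambda>_. {..<d})"
    have aI: "a \<in> I" and CI: "C \<subseteq> I" using insert by auto
    have IH: "(\<Sum>w\<in>?W. ncell C w i) = real (card ?W) * real (card C) / d"
      "(\<Sum>w\<in>?W. (ncell C w i)^2) = real (card ?W) * (real (card C) / d + real (card C) * (real (card C) - 1) / d^2)"
      using insert.IH[OF CI] by auto
    have R: "\<And>f. (\<Sum>w\<in>?W. f w) = (\<Sum>w\<in>?W. \<Sum>u\<in>{..<d}. f (w(a:=u))) / d"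
      using rerand[OF assms(1) aI, of "{..<d}"] d0 by auto
    have ni: "\<And>w u. ncell (insert a C) (w(a:=u)) i = (if u = i then 1 else 0) + ncell C w i"
      using ncell_insert[OF insert(1,2)] ncell_upd[OF insert(2)] by simp
    have ind: "(\<Sum>u\<in>{..<d}. (if u = i then 1 else 0::real)) = 1" using assms(3) by simp
    have q1: "\<And>w. (\<Sum>u\<in>{..<d}. ncell (insert a C) (w(a:=u)) i) = 1 + d * ncell C w i"
      unfolding ni by (simp add: sum.distrib ind)
    have q2: "\<And>w. (\<Sum>u\<in>{..<d}. (ncell (insert a C) (w(a:=u)) i)^2) = 1 + 2 * ncell C w i + d * (ncell C w i)^2"
    proof -
      fix w
      have "\<And>u. ((if u = i then 1 else 0) + ncell C w i)^2
          = (if u = i then 1 else 0) * (1 + 2 * ncell C w i) + (ncell C w i)^2"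
        by (simp add: power2_eq_square algebra_simps)
      then show "?thesis w" unfolding ni
        by (simp add: sum.distrib sum_distrib_right[symmetric] ind)
    qed
    have c: "real (card (insert a C)) = real (card C) + 1" using insert by simp
    have s1: "(\<Sum>w\<in>?W. ncell (insert a C) w i) = (real (card ?W) + d * (\<Sum>w\<in>?W. ncell C w i)) / d"
      by (subst R) (simp add: q1 sum.distrib sum_distrib_left)
    have s2: "(\<Sum>w\<in>?W. (ncell (insert a C) w i)^2) =
        (real (card ?W) + 2 * (\<Sum>w\<in>?W. ncell C w i) + d * (\<Sum>w\<in>?W. (ncell C w i)^2)) / d"
      by (subst R) (simp add: q2 sum.distrib sum_distrib_left)
    show ?case
      unfolding s1 s2 IH c using d0
      by (simp add: field_simps power2_eq_square)
  qed
qed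



primrec bsq :: "nat \<Rightarrow> (nat \<Rightarrow> bool) \<Rightarrow> nat \<Rightarrow> nat \<times> nat" where
  "bsq K m 0 = (0, 2^K)"
| "bsq K m (Suc j) = (if m j then (fst (bsq K m j), fst (bsq K m j) + 2^(K - Suc j))
                       else (fst (bsq K m j) + 2^(K - Suc j), snd (bsq K m j)))"

definition mid :: "nat \<Rightarrow> (nat \<Rightarrow> bool) \<Rightarrow> nat \<Rightarrow> nat" where
  "mid K m j = fst (bsq K m j) + 2^(K - Suc j)"

definition thr :: "nat \<Rightarrow> (nat \<Rightarrow> bool) \<Rightarrow> nat" where
  "thr K m = snd (bsq K m K)"

lemma bsq_len: "j \<le> K \<Longrightarrow> snd (bsq K m j) = fst (bsq K m j) + 2^(K - j)"
proof (induction j)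
  case 0 then show ?case by simp
next
  case (Suc j)
  then have e: "(2::nat)^(K - j) = 2^(K - Suc j) + 2^(K - Suc j)"
    by (metis Suc_diff_le Suc_le_lessD diff_Suc_Suc mult_2 power_Suc)
  show ?case using Suc by (auto simp: e)
qed

lemma bsq_mono: "j \<le> j' \<Longrightarrow> j' \<le> K \<Longrightarrow> fst (bsq K m j) \<le> fst (bsq K m j') \<and> snd (bsq K m j') \<le> snd (bsq K m j)"
proof (induction j' rule: dec_induct)
  case base then show ?case by simp
next
  case (step j')
  then have len: "snd (bsq K m j') = fst (bsq K m j') + 2^(K - j')" by (intro bsq_len) auto
  have p: "(2::nat)^(K - Suc j') \<le> 2^(K - j')" by (intro power_increasing) auto
  have IH: "fst (bsq K m j) \<le> fst (bsq K m j') \<and> snd (bsq K m j') \<le> snd (bsq K m j)"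
    using step by auto
  show ?case
  proof (cases "m j'")
    case True
    then have "fst (bsq K m (Suc j')) = fst (bsq K m j')"
      "snd (bsq K m (Suc j')) = fst (bsq K m j') + 2^(K - Suc j')" by simp_all
    then show ?thesis using IH p len by linarith
  next
    case False
    then have "fst (bsq K m (Suc j')) = fst (bsq K m j') + 2^(K - Suc j')"
      "snd (bsq K m (Suc j')) = snd (bsq K m j')" by simp_all
    then show ?thesis using IH p len by linarith
  qed
qed

lemma thr_mid:
  assumes "j < K"
  shows "thr K m \<le> mid K m j \<longleftrightarrow> m j"
proof (cases "m j")
  case True
  then have "snd (bsq K m (Suc j)) = mid K m j" by (simp add: mid_def)
  moreover have "snd (bsq K m K) \<le> snd (bsq K m (Suc j))" using bsq_mono[of "Suc j" K K m] assms by auto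
  ultimately show ?thesis using True by (simp add: thr_def)
next
  case False
  then have "fst (bsq K m (Suc j)) = mid K m j" by (simp add: mid_def)
  moreover have "fst (bsq K m (Suc j)) \<le> fst (bsq K m K)" using bsq_mono[of "Suc j" K K m] assms by auto
  moreover have "snd (bsq K m K) = fst (bsq K m K) + 1" using bsq_len[of K K m] by simp
  ultimately show ?thesis using False by (simp add: thr_def)
qed

lemma mid_lt: "j < K \<Longrightarrow> mid K m j < 2^K"
proof -
  assume j: "j < K"
  have "snd (bsq K m j) = fst (bsq K m j) + 2^(K - j)" using j by (intro bsq_len) auto
  moreover have "snd (bsq K m j) \<le> 2^K" using bsq_mono[of 0 j K m] j by auto
  moreover have "(2::nat)^(K - Suc j) < 2^(K - j)" using j by (intro power_strict_increasing) auto
  ultimately show ?thesis unfolding mid_def by linarith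
qed

lemma thr_le: "thr K m \<le> 2^K"
  using bsq_mono[of 0 K K m] by (simp add: thr_def)

lemma bsq_cong: "(\<And>k. k < j \<Longrightarrow> m k = m' k) \<Longrightarrow> bsq K m j = bsq K m' j"
  by (induction j) auto

lemma mid_cong: "(\<And>k. k < j \<Longrightarrow> m k = m' k) \<Longrightarrow> mid K m j = mid K m' j"
  unfolding mid_def using bsq_cong[of j m m' K] by simp



definition ep :: "nat \<Rightarrow> nat \<Rightarrow> nat \<Rightarrow> nat" where "ep K L t = min (t div L) (K - 1)"
definition Ep :: "nat \<Rightarrow> nat \<Rightarrow> nat \<Rightarrow> nat \<Rightarrow> nat set" where "Ep K L T j = {t. t < T \<and> ep K L t = j}"
definition cell :: "nat \<Rightarrow> nat \<Rightarrow> nat \<Rightarrow> (nat \<Rightarrow> nat) \<Rightarrow> nat \<Rightarrow> nat \<Rightarrow> nat set" where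
  "cell K L T w j i = {t. t < T \<and> ep K L t = j \<and> w t = i}"
definition maj :: "nat \<Rightarrow> nat \<Rightarrow> nat \<Rightarrow> (nat \<Rightarrow> real) \<Rightarrow> (nat \<Rightarrow> nat) \<Rightarrow> nat \<Rightarrow> nat \<Rightarrow> bool" where
  "maj K L T y w j i \<longleftrightarrow> SS (cell K L T w j i) y \<ge> 0"
definition posn :: "nat \<Rightarrow> nat \<Rightarrow> nat \<Rightarrow> (nat \<Rightarrow> real) \<Rightarrow> (nat \<Rightarrow> nat) \<Rightarrow> nat \<Rightarrow> nat" where
  "posn K L T y w t = mid K (\<lambda>j. maj K L T y w j (w t)) (ep K L t)"
definition lab :: "nat \<Rightarrow> nat \<Rightarrow> nat \<Rightarrow> (nat \<Rightarrow> real) \<Rightarrow> (nat \<Rightarrow> nat) \<Rightarrow> nat \<Rightarrow> real" where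
  "lab K L T y w t = (if maj K L T y w (ep K L t) (w t) then 1 else 0)"

lemma ep_lt: "K \<ge> 1 \<Longrightarrow> ep K L t < K"
  unfolding ep_def by auto

lemma ep_mono: "s \<le> t \<Longrightarrow> ep K L s \<le> ep K L t"
  unfolding ep_def by (simp add: div_le_mono min.coboundedI1 min_le_iff_disj)

lemma ep_less_imp: "ep K L s < ep K L t \<Longrightarrow> s < t"
  using ep_mono[of t s K L] by (meson not_le)

lemma lab_thr:
  assumes "K \<ge> 1"
  shows "lab K L T y w t = (if thr K (\<lambda>j. maj K L T y w j (w t)) \<le> posn K L T y w t then 1 else 0)"
  unfolding lab_def posn_def using thr_mid[OF ep_lt[OF assms]] by simp

lemma card_Ep:
  assumes "j < K" "K * L \<le> T"
  shows "card (Ep K L T j) \<ge> L"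
proof -
  have "{j*L..<j*L+L} \<subseteq> Ep K L T j"
  proof
    fix t assume t: "t \<in> {j*L..<j*L+L}"
    then have "t div L = j" by (metis atLeastLessThan_iff div_nat_eqI mult.commute add.commute mult_Suc_right)
    moreover have "j * L + L \<le> K * L" using assms by (metis Suc_leI add.commute mult_Suc mult_le_mono1)
    ultimately show "t \<in> Ep K L T j" using t assms unfolding Ep_def ep_def by auto
  qed
  moreover have "finite (Ep K L T j)" unfolding Ep_def by auto
  ultimately show ?thesis by (metis card_atLeastLessThan card_mono add_diff_cancel_left')
qed

lemma comp_identity:
  assumes K: "K \<ge> 1" and y: "y \<in> PiE {..<T} (\<lambda>_. {0,1::real})" and w: "w \<in> PiE {..<T} (\<lambda>_. {..<d})"
  shows "(\<Sum>t<T. \<bar>lab K L T y w t - y t\<bar>) = T/2 - (1/2) * (\<Sum>j<K. \<Sum>i<d. \<bar>SS (cell K L T w j i) y\<bar>)"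
proof -
  define sg where "sg t = (if maj K L T y w (ep K L t) (w t) then 1 else -1::real)" for t
  have pt: "\<bar>lab K L T y w t - y t\<bar> = 1/2 - sg t * eps y t / 2" if "t < T" for t
  proof -
    have "y t = 0 \<or> y t = 1" using y that by (auto simp: PiE_iff)
    then show ?thesis unfolding lab_def sg_def eps_def by auto
  qed
  have grp: "(\<Sum>t<T. sg t * eps y t) = (\<Sum>(j,i)\<in>{..<K}\<times>{..<d}. \<Sum>t\<in>cell K L T w j i. sg t * eps y t)"
  proof -
    have "(\<Sum>t<T. sg t * eps y t) = (\<Sum>ji\<in>{..<K}\<times>{..<d}. \<Sum>t\<in>{t\<in>{..<T}. (ep K L t, w t) = ji}. sg t * eps y t)"
      by (rule sum.group[symmetric]) (use ep_lt[OF K] w in \<open>auto simp: PiE_iff\<close>)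
    also have "\<dots> = (\<Sum>(j,i)\<in>{..<K}\<times>{..<d}. \<Sum>t\<in>cell K L T w j i. sg t * eps y t)"
      by (intro sum.cong refl) (auto simp: cell_def intro!: sum.cong)
    finally show ?thesis .
  qed
  have cellsum: "(\<Sum>t\<in>cell K L T w j i. sg t * eps y t) = \<bar>SS (cell K L T w j i) y\<bar>" for j i
  proof -
    have "(\<Sum>t\<in>cell K L T w j i. sg t * eps y t) = (if maj K L T y w j i then 1 else -1) * SS (cell K L T w j i) y"
      unfolding SS_def sum_distrib_left by (intro sum.cong refl) (auto simp: sg_def cell_def)
    then show ?thesis by (auto simp: maj_def)
  qed
  have "(\<Sum>t<T. \<bar>lab K L T y w t - y t\<bar>) = (\<Sum>t<T. 1/2 - sg t * eps y t / 2)"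
    by (intro sum.cong) (auto simp: pt)
  also have "\<dots> = T/2 - (1/2) * (\<Sum>t<T. sg t * eps y t)"
    by (simp add: sum_subtractf sum_divide_distrib)
  also have "\<dots> = T/2 - (1/2) * (\<Sum>j<K. \<Sum>i<d. \<bar>SS (cell K L T w j i) y\<bar>)"
    unfolding grp cellsum by (simp add: sum.cartesian_product)
  finally show ?thesis .
qed

lemma learner_identity:
  fixes P :: "nat \<Rightarrow> (nat \<Rightarrow> real) \<Rightarrow> real"
  assumes P01: "\<And>t y. 0 \<le> P t y \<and> P t y \<le> 1"
    and Pdep: "\<And>t y s. t < T \<Longrightarrow> P t (y(t:=s)) = P t y"
  shows "(\<Sum>y\<in>PiE {..<T} (\<lambda>_. {0,1::real}). \<Sum>t<T. \<bar>P t y - y t\<bar>) = card (PiE {..<T} (\<lambda>_. {0,1::real})) * T / 2"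
proof -
  let ?Y = "PiE {..<T} (\<lambda>_. {0,1::real})"
  have "(\<Sum>y\<in>?Y. \<bar>P t y - y t\<bar>) = card ?Y / 2" if t: "t < T" for t
  proof -
    have "(\<Sum>y\<in>?Y. \<bar>P t y - y t\<bar>) = (\<Sum>y\<in>?Y. \<Sum>s\<in>{0,1}. \<bar>P t (y(t:=s)) - (y(t:=s)) t\<bar>) / card {0,1::real}"
      by (rule rerand) (use t in auto)
    also have "\<dots> = (\<Sum>y\<in>?Y. 1) / 2"
    proof -
      have "\<And>y. (\<Sum>s\<in>{0,1}. \<bar>P t (y(t:=s)) - (y(t:=s)) t\<bar>) = 1"
      proof -
        fix y
        have "0 \<le> P t y" "P t y \<le> 1" using P01 by auto
        then show "(\<Sum>s\<in>{0,1}. \<bar>P t (y(t:=s)) - (y(t:=s)) t\<bar>) = 1"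
          using Pdep[OF t] by simp
      qed
      then show ?thesis by simp
    qed
    finally show ?thesis by simp
  qed
  then have "(\<Sum>t<T. \<Sum>y\<in>?Y. \<bar>P t y - y t\<bar>) = (\<Sum>t<T. card ?Y / 2)"
    by (intro sum.cong) auto
  then show ?thesis by (subst sum.swap) simp
qed

lemma bound6:
  fixes m \<mu> q :: real
  assumes "0 < m" "m \<le> \<mu>" "0 \<le> q" "q \<le> \<mu>^2"
  shows "(1/sqrt \<mu>)*\<mu> - (4*(1/sqrt \<mu>)^3/27)*(\<mu> + 3*q) \<ge> (5/9)* sqrt m - 4/(27* sqrt m)"
proof -
  define s where "s = sqrt \<mu>"
  define r where "r = sqrt m"
  have r0: "r > 0" using assms unfolding r_def by simp
  have rs: "r \<le> s" unfolding r_def s_def using assms by simp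
  have s0: "s > 0" using r0 rs by simp
  have mu: "\<mu> = s^2" unfolding s_def using assms by simp
  have "(4*(1/s)^3/27)*(\<mu> + 3*q) \<le> (4*(1/s)^3/27)*(s^2 + 3* s^4)"
    using assms s0 unfolding mu by (intro mult_left_mono) (auto simp: power_mult[symmetric])
  also have "\<dots> = 4/(27* s) + (4/9) * s" using s0 by (simp add: field_simps power2_eq_square power3_eq_cube power4_eq_xxxx)
  finally have A: "(1/s)*\<mu> - (4*(1/s)^3/27)*(\<mu> + 3*q) \<ge> (5/9)* s - 4/(27* s)"
    using s0 unfolding mu by (simp add: power2_eq_square)
  have "4/(27* s) \<le> 4/(27*r)" using r0 rs by (simp add: frac_le)
  then have "(5/9)* s - 4/(27* s) \<ge> (5/9)*r - 4/(27*r)" using rs by linarith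
  then show ?thesis using A unfolding s_def r_def by linarith
qed



lemma cell_eq: "cell K L T w j i = {t\<in>Ep K L T j. w t = i}"
  unfolding cell_def Ep_def by auto

lemma cell_pair_bound:
  assumes j: "j < K" and i: "i < d" and L1: "L \<ge> 1" and KL: "K * L \<le> T"
  shows "(\<Sum>w\<in>PiE {..<T} (\<lambda>_. {..<d}). \<Sum>y\<in>PiE {..<T} (\<lambda>_. {0,1::real}). \<bar>SS (cell K L T w j i) y\<bar>)
     \<ge> real (card (PiE {..<T} (\<lambda>_. {..<d}))) * real (card (PiE {..<T} (\<lambda>_. {0,1::real})))
        * ((5/9) * sqrt (real L / d) - 4/(27 * sqrt (real L / d)))"
proof -
  let ?W = "PiE {..<T} (\<lambda>_. {..<d})"
  let ?Y = "PiE {..<T} (\<lambda>_. {0,1::real})"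
  define c where "c = real (card (Ep K L T j))"
  have d0: "real d > 0" using i by simp
  have cL: "c \<ge> L" unfolding c_def using card_Ep[OF j KL] by simp
  define \<mu> where "\<mu> = c / d"
  define q where "q = c * (c - 1) / d^2"
  define \<alpha> where "\<alpha> = 1 / sqrt \<mu>"
  have mu_pos: "\<mu> > 0" unfolding \<mu>_def using cL L1 d0 by simp
  have a0: "\<alpha> \<ge> 0" unfolding \<alpha>_def using mu_pos by simp
  have EpT: "Ep K L T j \<subseteq> {..<T}" unfolding Ep_def by auto
  have "(\<Sum>w\<in>?W. \<Sum>y\<in>?Y. \<bar>SS (cell K L T w j i) y\<bar>)
     \<ge> (\<Sum>w\<in>?W. real (card ?Y) * (\<alpha> * ncell (Ep K L T j) w i - (4 * \<alpha>^3 / 27) * (3 * (ncell (Ep K L T j) w i)^2 - 2 * ncell (Ep K L T j) w i)))"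
  proof (rule sum_mono)
    fix w assume "w \<in> ?W"
    have "cell K L T w j i \<subseteq> {..<T}" unfolding cell_def by auto
    from abs_SS_bound[OF _ this a0]
    show "real (card ?Y) * (\<alpha> * ncell (Ep K L T j) w i - (4 * \<alpha>^3 / 27) * (3 * (ncell (Ep K L T j) w i)^2 - 2 * ncell (Ep K L T j) w i))
       \<le> (\<Sum>y\<in>?Y. \<bar>SS (cell K L T w j i) y\<bar>)"
      unfolding ncell_def cell_eq by simp
  qed
  also have "(\<Sum>w\<in>?W. real (card ?Y) * (\<alpha> * ncell (Ep K L T j) w i - (4 * \<alpha>^3 / 27) * (3 * (ncell (Ep K L T j) w i)^2 - 2 * ncell (Ep K L T j) w i)))
     = real (card ?Y) * (\<alpha> * (\<Sum>w\<in>?W. ncell (Ep K L T j) w i) - (4 * \<alpha>^3 / 27) * (3 * (\<Sum>w\<in>?W. (ncell (Ep K L T j) w i)^2) - 2 * (\<Sum>w\<in>?W. ncell (Ep K L T j) w i)))"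
  proof -
    let ?n = "\<lambda>w. ncell (Ep K L T j) w i"
    have "(\<Sum>w\<in>?W. \<alpha> * ?n w - (4 * \<alpha>^3 / 27) * (3 * (?n w)^2 - 2 * ?n w))
       = \<alpha> * (\<Sum>w\<in>?W. ?n w) - (4 * \<alpha>^3 / 27) * (3 * (\<Sum>w\<in>?W. (?n w)^2) - 2 * (\<Sum>w\<in>?W. ?n w))"
      by (simp add: sum_subtractf sum_distrib_left sum_divide_distrib right_diff_distrib)
    then show ?thesis by (simp add: sum_distrib_left[symmetric])
  qed
  also have "\<dots> = real (card ?Y) * real (card ?W) * (\<alpha> * \<mu> - (4 * \<alpha>^3 / 27) * (\<mu> + 3 * q))"
  proof -
    have S1: "(\<Sum>w\<in>?W. ncell (Ep K L T j) w i) = real (card ?W) * \<mu>"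
      and S2: "(\<Sum>w\<in>?W. (ncell (Ep K L T j) w i)^2) = real (card ?W) * (\<mu> + q)"
      using cell_moments[OF _ EpT i] unfolding c_def[symmetric] \<mu>_def q_def by auto
    show ?thesis unfolding S1 S2 by (simp add: algebra_simps)
  qed
  finally have A: "(\<Sum>w\<in>?W. \<Sum>y\<in>?Y. \<bar>SS (cell K L T w j i) y\<bar>)
      \<ge> real (card ?Y) * real (card ?W) * (\<alpha> * \<mu> - (4 * \<alpha>^3 / 27) * (\<mu> + 3 * q))" .
  have m0: "real L / d > 0" using L1 d0 by simp
  have mmu: "real L / d \<le> \<mu>" unfolding \<mu>_def using cL d0 by (simp add: divide_right_mono)
  have q0: "q \<ge> 0" unfolding q_def using cL L1 by simp
  have qmu: "q \<le> \<mu>^2" unfolding q_def \<mu>_def using cL L1 d0 by (simp add: power_divide power2_eq_square divide_right_mono mult_left_mono)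
  have B: "\<alpha> * \<mu> - (4 * \<alpha>^3 / 27) * (\<mu> + 3 * q) \<ge> (5/9) * sqrt (real L / d) - 4/(27 * sqrt (real L / d))"
    using bound6[OF m0 mmu q0 qmu] unfolding \<alpha>_def by (simp add: mult.commute)
  have "real (card ?Y) * real (card ?W) * (\<alpha> * \<mu> - (4 * \<alpha>^3 / 27) * (\<mu> + 3 * q))
     \<ge> real (card ?Y) * real (card ?W) * ((5/9) * sqrt (real L / d) - 4/(27 * sqrt (real L / d)))"
    by (intro mult_left_mono B) auto
  then show ?thesis using A by (simp add: mult.commute mult.left_commute)
qed

lemma main_comb:
  fixes P :: "nat \<Rightarrow> (nat \<Rightarrow> nat) \<Rightarrow> (nat \<Rightarrow> real) \<Rightarrow> real"
  assumes K1: "K \<ge> 1" and d1: "d \<ge> 1" and L1: "L \<ge> 1" and KL: "K * L \<le> T"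
    and P01: "\<And>t w y. 0 \<le> P t w y \<and> P t w y \<le> 1"
    and Pdep: "\<And>t w y s. t < T \<Longrightarrow> P t w (y(t:=s)) = P t w y"
  shows "(\<Sum>w\<in>PiE {..<T} (\<lambda>_. {..<d}). \<Sum>y\<in>PiE {..<T} (\<lambda>_. {0,1::real}).
            (\<Sum>t<T. \<bar>P t w y - y t\<bar>) - (\<Sum>t<T. \<bar>lab K L T y w t - y t\<bar>))
     \<ge> real (card (PiE {..<T} (\<lambda>_. {..<d}))) * real (card (PiE {..<T} (\<lambda>_. {0,1::real})))
        * (real K * real d * ((5/18) * sqrt (real L / d) - 2/(27 * sqrt (real L / d))))"
proof -
  let ?W = "PiE {..<T} (\<lambda>_. {..<d})"
  let ?Y = "PiE {..<T} (\<lambda>_. {0,1::real})"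
  let ?b = "(5/9) * sqrt (real L / d) - 4/(27 * sqrt (real L / d))"
  have per_w: "(\<Sum>y\<in>?Y. (\<Sum>t<T. \<bar>P t w y - y t\<bar>) - (\<Sum>t<T. \<bar>lab K L T y w t - y t\<bar>))
      = (1/2) * (\<Sum>j<K. \<Sum>i<d. \<Sum>y\<in>?Y. \<bar>SS (cell K L T w j i) y\<bar>)" if w: "w \<in> ?W" for w
  proof -
    have "(\<Sum>y\<in>?Y. \<Sum>t<T. \<bar>P t w y - y t\<bar>) = card ?Y * T / 2"
      by (rule learner_identity[of "\<lambda>t y. P t w y"]) (use P01 Pdep in auto)
    moreover have "(\<Sum>y\<in>?Y. \<Sum>t<T. \<bar>lab K L T y w t - y t\<bar>) = (\<Sum>y\<in>?Y. T/2 - (1/2) * (\<Sum>j<K. \<Sum>i<d. \<bar>SS (cell K L T w j i) y\<bar>))"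
      by (intro sum.cong refl comp_identity[OF K1 _ w])
    moreover have "(\<Sum>y\<in>?Y. T/2 - (1/2) * (\<Sum>j<K. \<Sum>i<d. \<bar>SS (cell K L T w j i) y\<bar>))
       = card ?Y * T / 2 - (1/2) * (\<Sum>y\<in>?Y. \<Sum>j<K. \<Sum>i<d. \<bar>SS (cell K L T w j i) y\<bar>)"
      by (simp add: sum_subtractf sum_divide_distrib)
    moreover have "(\<Sum>y\<in>?Y. \<Sum>j<K. \<Sum>i<d. \<bar>SS (cell K L T w j i) y\<bar>) = (\<Sum>j<K. \<Sum>i<d. \<Sum>y\<in>?Y. \<bar>SS (cell K L T w j i) y\<bar>)"
      by (subst sum.swap) (simp add: sum.swap[of _ ?Y])
    ultimately show ?thesis
      by (simp add: sum_subtractf)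
  qed
  have "(\<Sum>w\<in>?W. \<Sum>y\<in>?Y. (\<Sum>t<T. \<bar>P t w y - y t\<bar>) - (\<Sum>t<T. \<bar>lab K L T y w t - y t\<bar>))
      = (1/2) * (\<Sum>j<K. \<Sum>i<d. \<Sum>w\<in>?W. \<Sum>y\<in>?Y. \<bar>SS (cell K L T w j i) y\<bar>)"
    by (simp add: per_w sum_divide_distrib sum.swap[of _ ?W])
  also have "\<dots> \<ge> (1/2) * (\<Sum>j<K. \<Sum>i<d. real (card ?W) * real (card ?Y) * ?b)"
    by (intro mult_left_mono sum_mono cell_pair_bound[OF _ _ L1 KL]) auto
  finally show ?thesis by (simp add: algebra_simps)
qed



lemma maj_cong:
  assumes "j < ep K L u" "\<And>s. s < u \<Longrightarrow> y' s = y s" "\<And>s. s < u \<Longrightarrow> w' s = w s"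
  shows "maj K L T y' w' j i = maj K L T y w j i"
proof -
  have sub: "s < u" if "ep K L s = j" for s using ep_less_imp[of K L s u] assms(1) that by simp
  have c: "cell K L T w' j i = cell K L T w j i"
    unfolding cell_def using sub assms(3) by auto
  have "SS (cell K L T w j i) y' = SS (cell K L T w j i) y"
    unfolding SS_def eps_def cell_def using sub assms(2) by (intro sum.cong) auto
  then show ?thesis unfolding maj_def c by simp
qed

lemma posn_cong:
  assumes "\<And>s. s < u \<Longrightarrow> y' s = y s" "\<And>s. s < u \<Longrightarrow> w' s = w s" "w' u = w u"
  shows "posn K L T y' w' u = posn K L T y w u"
  unfolding posn_def assms(3)
  by (rule mid_cong) (rule maj_cong[OF _ assms(1,2)], auto)

lemma nn_integral_return_ge:
  assumes "a \<in> space N" "{a} \<in> sets N"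
  shows "(\<integral>\<^sup>+x. f x \<partial>return N a) \<ge> f a"
proof -
  have "(\<integral>\<^sup>+x. f x \<partial>return N a) \<ge> (\<integral>\<^sup>+x. f a * indicator {a} x \<partial>return N a)"
    by (intro nn_integral_mono) (auto simp: indicator_def)
  also have "(\<integral>\<^sup>+x. f a * indicator {a} x \<partial>return N a) = f a"
    using assms by (subst nn_integral_cmult_indicator) auto
  finally show ?thesis .
qed

lemma exists_ge_avg:
  fixes f :: "'a \<Rightarrow> real"
  assumes "finite Y" "Y \<noteq> {}" "(\<Sum>y\<in>Y. f y) \<ge> real (card Y) * B"
  shows "\<exists>y\<in>Y. f y \<ge> B"
proof (rule ccontr)
  assume "\<not> ?thesis"
  then have "\<And>y. y \<in> Y \<Longrightarrow> f y < B" by auto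
  then have "(\<Sum>y\<in>Y. f y) < (\<Sum>y\<in>Y. B)" using assms by (intro sum_strict_mono) auto
  then show False using assms by simp
qed

lemma abs_regret_ge:
  assumes "h \<in> H"
  shows "abs_regret H T \<phi> x y \<ge> ereal ((\<Sum>t<T. \<bar>\<phi> t (restrict x {..t}) (restrict y {..<t}) - y t\<bar>) - (\<Sum>t<T. \<bar>h (x t) - y t\<bar>))"
proof -
  have "(INF h\<in>H. ereal (\<Sum>t<T. \<bar>h (x t) - y t\<bar>)) \<le> ereal (\<Sum>t<T. \<bar>h (x t) - y t\<bar>)"
    using assms by (rule INF_lower)
  then have "ereal (\<Sum>t<T. \<bar>\<phi> t (restrict x {..t}) (restrict y {..<t}) - y t\<bar>) - (INF h\<in>H. ereal (\<Sum>t<T. \<bar>h (x t) - y t\<bar>))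
     \<ge> ereal (\<Sum>t<T. \<bar>\<phi> t (restrict x {..t}) (restrict y {..<t}) - y t\<bar>) - ereal (\<Sum>t<T. \<bar>h (x t) - y t\<bar>)"
    using ereal_minus_mono[OF order_refl] by blast
  then show ?thesis unfolding abs_regret_def by simp
qed

lemma worst_ge:
  assumes "h \<in> H" "y \<in> PiE {..<T} (\<lambda>_. {0,1})"
  shows "e2ennreal (worst_regret H T \<phi> x) \<ge> ennreal ((\<Sum>t<T. \<bar>\<phi> t (restrict x {..t}) (restrict y {..<t}) - y t\<bar>) - (\<Sum>t<T. \<bar>h (x t) - y t\<bar>))"
proof -
  have "worst_regret H T \<phi> x \<ge> abs_regret H T \<phi> x y"
    unfolding worst_regret_def using assms(2) by (rule SUP_upper)
  then have "worst_regret H T \<phi> x \<ge> ereal ((\<Sum>t<T. \<bar>\<phi> t (restrict x {..t}) (restrict y {..<t}) - y t\<bar>) - (\<Sum>t<T. \<bar>h (x t) - y t\<bar>))"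
    using abs_regret_ge[OF assms(1)] order_trans by blast
  from e2ennreal_mono[OF this] show ?thesis by simp
qed



lemma dirac_in_U:
  assumes xs: "xs \<in> space (seq_space M T)" and card: "card (xs ` {..<T}) \<le> K"
  shows "return (seq_space M T) xs \<in> U_K1 M T K"
proof -
  let ?N = "seq_space M T"
  define \<kappa> where "\<kappa> t h = return M (xs t)" for t :: nat and h :: "nat \<Rightarrow> 'a"
  have xsM: "xs t \<in> space M" if "t < T" for t
    using xs that unfolding seq_space_def space_PiM by (auto simp: PiE_iff)
  have CL: "conditional_laws M T (return ?N xs) \<kappa>"
    unfolding conditional_laws_def
  proof (intro allI impI conjI ballI)
    fix t assume t: "t < T"
    show "\<kappa> t \<in> seq_space M t \<rightarrow>\<^sub>M prob_algebra M"
      unfolding \<kappa>_def by (rule measurable_const) (simp add: space_prob_algebra prob_space_return[OF xsM[OF t]])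
    fix A B assume A: "A \<in> sets (seq_space M t)" and B: "B \<in> sets M"
    have rm: "(\<lambda>x. restrict x {..<t}) \<in> ?N \<rightarrow>\<^sub>M seq_space M t"
      unfolding seq_space_def by (rule measurable_restrict_subset) (use t in auto)
    have cm: "(\<lambda>x. x t) \<in> ?N \<rightarrow>\<^sub>M M"
      unfolding seq_space_def using t by (intro measurable_component_singleton) auto
    have Sset: "{x\<in>space (return ?N xs). restrict x {..<t} \<in> A \<and> x t \<in> B} \<in> sets ?N"
    proof -
      have "{x\<in>space (return ?N xs). restrict x {..<t} \<in> A \<and> x t \<in> B}
          = ((\<lambda>x. restrict x {..<t}) -` A \<inter> space ?N) \<inter> ((\<lambda>x. x t) -` B \<inter> space ?N)" by auto
      then show ?thesis using measurable_sets[OF rm A] measurable_sets[OF cm B] by auto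
    qed
    have gm: "(\<lambda>x. indicator A (restrict x {..<t}) * emeasure (\<kappa> t (restrict x {..<t})) B :: ennreal) \<in> borel_measurable ?N"
    proof -
      have "(\<lambda>x. indicator A (restrict x {..<t}) :: ennreal) \<in> borel_measurable ?N"
        using measurable_compose[OF rm borel_measurable_indicator[OF A]] by simp
      then show ?thesis unfolding \<kappa>_def by simp
    qed
    have xsN: "xs \<in> space ?N" by (rule xs)
    show "emeasure (return ?N xs) {x\<in>space (return ?N xs). restrict x {..<t} \<in> A \<and> x t \<in> B}
        = (\<integral>\<^sup>+ x. indicator A (restrict x {..<t}) * emeasure (\<kappa> t (restrict x {..<t})) B \<partial>return ?N xs)"
    proof -
      have "(\<integral>\<^sup>+ x. indicator A (restrict x {..<t}) * emeasure (\<kappa> t (restrict x {..<t})) B \<partial>return ?N xs)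
          = indicator A (restrict xs {..<t}) * emeasure (\<kappa> t (restrict xs {..<t})) B"
        by (rule nn_integral_return[OF xsN gm])
      then show ?thesis using Sset xsN B unfolding \<kappa>_def by (simp add: indicator_def)
    qed
  qed
  have AE: "AE x in return ?N xs. card ((\<lambda>t. \<kappa> t (restrict x {..<t})) ` {..<T}) \<le> K"
  proof (rule AE_I2)
    fix x
    have "(\<lambda>t. \<kappa> t (restrict x {..<t})) ` {..<T} = return M ` (xs ` {..<T})"
      unfolding \<kappa>_def by auto
    then show "card ((\<lambda>t. \<kappa> t (restrict x {..<t})) ` {..<T}) \<le> K"
      using card_image_le[of "xs ` {..<T}" "return M"] card by auto
  qed
  show ?thesis unfolding U_K1_def
    using prob_space_return[OF xs] CL AE by auto
qed



lemma num2:
  fixes K L T :: nat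
  assumes "L \<ge> 1" "2 * K * L \<ge> T"
  shows "real K * ((5/18) * sqrt (real L) - 2/(27 * sqrt (real L))) \<ge> (1/8) * sqrt (real K * real T)"
proof -
  define s where "s = sqrt (real L)"
  have s1: "s \<ge> 1" unfolding s_def using assms by simp
  have ss: "1 \<le> s * s" using s1 mult_mono[of 1 s 1 s] by simp
  have "2/(27 * s) \<le> (2/27) * s" using s1 ss by (simp add: field_simps)
  then have A: "(5/18) * s - 2/(27 * s) \<ge> (11/54) * s" by simp
  have "real K * real T \<le> real K * (2 * real K * real L)"
  proof -
    have "real T \<le> real (2 * K * L)" using assms(2) by (simp only: of_nat_le_iff)
    then show ?thesis by (intro mult_left_mono) simp_all
  qed
  then have "sqrt (real K * real T) \<le> sqrt (2 * (real K)^2 * real L)"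
    by (simp add: power2_eq_square algebra_simps)
  also have "\<dots> = real K * sqrt 2 * s" unfolding s_def by (simp add: real_sqrt_mult)
  also have "\<dots> \<le> real K * (3/2) * s"
  proof -
    have "sqrt 2 \<le> 3/2" by (rule real_le_lsqrt) (auto simp: power2_eq_square)
    then show ?thesis using s1 by (intro mult_right_mono mult_left_mono) auto
  qed
  finally have B: "(1/8) * sqrt (real K * real T) \<le> (3/16) * real K * s" by simp
  have "(3/16) * real K * s \<le> real K * ((11/54) * s)" using s1 by simp
  also have "\<dots> \<le> real K * ((5/18) * s - 2/(27 * s))" using A by (intro mult_left_mono) auto
  finally have C: "(3/16) * real K * s \<le> real K * ((5/18) * s - 2/(27 * s))" .
  show ?thesis using B C unfolding s_def by linarith
qed

lemma part2:
  assumes K1: "1 \<le> K" and KT: "K \<le> T" and phi: "\<phi> \<in> learners"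
  shows "(SUP \<nu>\<in>U_K1 (restrict_space borel {0..1::real}) T K. \<integral>\<^sup>+x. e2ennreal (worst_regret threshold_class T \<phi> x) \<partial>\<nu>)
           \<ge> ennreal ((1/8) * sqrt (real K * real T))"
proof -
  let ?M = "restrict_space borel {0..1::real}"
  let ?N = "seq_space ?M T"
  define L where "L = T div K"
  have L1: "L \<ge> 1" unfolding L_def using div_le_mono[OF KT, of K] K1 by simp
  have KL: "K * L \<le> T" unfolding L_def by (simp add: mult.commute)
  have KL2: "2 * K * L \<ge> T"
  proof -
    have e: "T = K * L + T mod K" unfolding L_def by simp
    have "T mod K < K" using K1 by simp
    then have "T < K * L + K" using e by linarith
    moreover have "K \<le> K * L" using L1 by simp
    ultimately show ?thesis by linarith
  qed
  define w0 where "w0 = restrict (\<lambda>_. 0::nat) {..<T}"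
  have W1: "PiE {..<T} (\<lambda>_. {..<1::nat}) = {w0}"
  proof -
    have "PiE {..<T} (\<lambda>_. {..<1::nat}) = PiE {..<T} (\<lambda>t. {w0 t})"
      by (intro PiE_cong) (auto simp: w0_def)
    also have "\<dots> = {w0}" by (rule PiE_singleton) (unfold w0_def, rule restrict_extensional)
    finally show ?thesis .
  qed
  define P where "P t w y = \<phi> t (restrict (\<lambda>s. real (posn K L T y w s) / 2^K) {..t}) (restrict y {..<t})"
    for t w y
  have P01: "0 \<le> P t w y \<and> P t w y \<le> 1" for t w y
    using phi unfolding learners_def P_def by auto
  have Pdep: "P t w (y(t:=v)) = P t w y" if "t < T" for t w y v
  proof -
    have "restrict (\<lambda>s. real (posn K L T (y(t:=v)) w s) / 2^K) {..t} = restrict (\<lambda>s. real (posn K L T y w s) / 2^K) {..t}"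
    proof (intro restrict_ext)
      fix s assume "s \<in> {..t}"
      then have "posn K L T (y(t:=v)) w s = posn K L T y w s" by (intro posn_cong) auto
      then show "real (posn K L T (y(t:=v)) w s) / 2^K = real (posn K L T y w s) / 2^K" by simp
    qed
    moreover have "restrict (y(t:=v)) {..<t} = restrict y {..<t}" by (intro restrict_ext) auto
    ultimately show ?thesis unfolding P_def by simp
  qed
  let ?Y = "PiE {..<T} (\<lambda>_. {0,1::real})"
  define B where "B = real K * real 1 * ((5/18) * sqrt (real L / real 1) - 2/(27 * sqrt (real L / real 1)))"
  note mc = main_comb[of K 1 L T P, OF K1 order_refl L1 KL P01 Pdep]
  have S: "(\<Sum>y\<in>?Y. (\<Sum>t<T. \<bar>P t w0 y - y t\<bar>) - (\<Sum>t<T. \<bar>lab K L T y w0 t - y t\<bar>)) \<ge> real (card ?Y) * B"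
    using mc unfolding W1 B_def by simp
  have fY: "finite ?Y" by (simp add: finite_PiE)
  have nY: "?Y \<noteq> {}" by (simp add: PiE_eq_empty_iff)
  obtain ys where ys: "ys \<in> ?Y"
    and R: "(\<Sum>t<T. \<bar>P t w0 ys - ys t\<bar>) - (\<Sum>t<T. \<bar>lab K L T ys w0 t - ys t\<bar>) \<ge> B"
    using exists_ge_avg[OF fY nY S] by blast
  define xs where "xs = restrict (\<lambda>s. real (posn K L T ys w0 s) / 2^K) {..<T}"
  define ms where "ms = (\<lambda>j. maj K L T ys w0 j 0)"
  have posn_w0: "posn K L T ys w0 t = mid K ms (ep K L t)" if "t < T" for t
    unfolding posn_def ms_def using that by (simp add: w0_def)
  have spM: "space ?M = {0..1}" by (simp add: space_restrict_space)
  have xs_in: "xs \<in> space ?N"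
  proof -
    have "real (posn K L T ys w0 t) / 2^K \<in> {0..1}" if "t < T" for t
    proof -
      have "posn K L T ys w0 t < 2^K" using posn_w0[OF that] mid_lt[OF ep_lt[OF K1]] by simp
      then have "real (posn K L T ys w0 t) \<le> real (2^K)" by (simp only: of_nat_le_iff less_imp_le)
      then have "real (posn K L T ys w0 t) \<le> 2^K" by simp
      then show ?thesis by simp
    qed
    then show ?thesis unfolding seq_space_def space_PiM spM xs_def by auto
  qed
  have card_xs: "card (xs ` {..<T}) \<le> K"
  proof -
    have "xs ` {..<T} \<subseteq> (\<lambda>j. real (mid K ms j) / 2^K) ` {..<K}"
      using posn_w0 ep_lt[OF K1] unfolding xs_def by auto
    then have "card (xs ` {..<T}) \<le> card ((\<lambda>j. real (mid K ms j) / 2^K) ` {..<K})"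
      by (intro card_mono) auto
    also have "\<dots> \<le> K" using card_image_le[of "{..<K}"] by simp
    finally show ?thesis .
  qed
  have nuU: "return ?N xs \<in> U_K1 ?M T K" by (rule dirac_in_U[OF xs_in card_xs])
  have sing: "{xs} \<in> sets ?N"
  proof -
    have "{xs} = PiE {..<T} (\<lambda>t. {xs t})" unfolding xs_def by (rule PiE_singleton[symmetric]) simp
    moreover have "{xs t} \<in> sets ?M" if "t < T" for t
    proof -
      have "xs t \<in> {0..1}" using xs_in that unfolding seq_space_def space_PiM spM by (auto simp: PiE_iff)
      then show ?thesis by (subst sets_restrict_space_iff) auto
    qed
    ultimately show ?thesis unfolding seq_space_def by (auto intro!: sets_PiM_I_finite)
  qed
  define a where "a = real (thr K ms) / 2^K"
  have ha: "(\<lambda>x. if a \<le> x then 1 else 0) \<in> threshold_class"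
  proof -
    have "real (thr K ms) \<le> real (2^K)" using thr_le[of K ms] by (simp only: of_nat_le_iff)
    then have "a \<in> {0..1}" unfolding a_def by simp
    then show ?thesis unfolding threshold_class_def by auto
  qed
  have lab_eq: "(if a \<le> xs t then 1 else 0) = lab K L T ys w0 t" if "t < T" for t
  proof -
    have "a \<le> xs t \<longleftrightarrow> thr K ms \<le> posn K L T ys w0 t"
      unfolding a_def xs_def using that by (simp add: field_simps)
    moreover have "lab K L T ys w0 t = (if thr K ms \<le> posn K L T ys w0 t then 1 else 0)"
      using lab_thr[OF K1, of L T ys w0 t] that unfolding ms_def by (simp add: w0_def)
    ultimately show ?thesis by simp
  qed
  have learn_eq: "\<phi> t (restrict xs {..t}) (restrict ys {..<t}) = P t w0 ys" if "t < T" for t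
  proof -
    have "{..<T} \<inter> {..t} = {..t}" using that by auto
    then show ?thesis unfolding P_def xs_def by simp
  qed
  have I1: "(\<integral>\<^sup>+x. e2ennreal (worst_regret threshold_class T \<phi> x) \<partial>return ?N xs) \<ge> e2ennreal (worst_regret threshold_class T \<phi> xs)"
    by (rule nn_integral_return_ge[OF xs_in sing])
  have I2: "e2ennreal (worst_regret threshold_class T \<phi> xs) \<ge>
      ennreal ((\<Sum>t<T. \<bar>\<phi> t (restrict xs {..t}) (restrict ys {..<t}) - ys t\<bar>) - (\<Sum>t<T. \<bar>(if a \<le> xs t then 1 else 0) - ys t\<bar>))"
    by (rule worst_ge[OF ha ys])
  have I3: "(\<Sum>t<T. \<bar>\<phi> t (restrict xs {..t}) (restrict ys {..<t}) - ys t\<bar>) - (\<Sum>t<T. \<bar>(if a \<le> xs t then 1 else 0) - ys t\<bar>)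
      = (\<Sum>t<T. \<bar>P t w0 ys - ys t\<bar>) - (\<Sum>t<T. \<bar>lab K L T ys w0 t - ys t\<bar>)"
    using learn_eq lab_eq by simp
  have I4: "B \<ge> (1/8) * sqrt (real K * real T)"
    unfolding B_def using num2[OF L1 KL2] by simp
  have "ennreal ((1/8) * sqrt (real K * real T)) \<le>
      ennreal ((\<Sum>t<T. \<bar>\<phi> t (restrict xs {..t}) (restrict ys {..<t}) - ys t\<bar>) - (\<Sum>t<T. \<bar>(if a \<le> xs t then 1 else 0) - ys t\<bar>))"
    by (rule ennreal_leI) (use I3 I4 R in linarith)
  then have "(\<integral>\<^sup>+x. e2ennreal (worst_regret threshold_class T \<phi> x) \<partial>return ?N xs) \<ge> ennreal ((1/8) * sqrt (real K * real T))"
    using I1 I2 by (meson order_trans)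
  then show ?thesis using nuU by (meson SUP_upper order_trans)
qed



lemma seq_space_all_sets:
  assumes "A \<subseteq> space (seq_space (count_space (UNIV::nat set)) n)"
  shows "A \<in> sets (seq_space (count_space (UNIV::nat set)) n)"
proof -
  let ?N = "seq_space (count_space (UNIV::nat set)) n"
  have sp: "space ?N = PiE {..<n} (\<lambda>_. UNIV)" unfolding seq_space_def space_PiM by simp
  have "countable (PiE {..<n} (\<lambda>_. UNIV :: nat set))" by (intro countable_PiE) auto
  then have cA: "countable A" using assms countable_subset unfolding sp by blast
  show ?thesis
  proof (rule sets.countable[OF _ cA])
    fix a assume "a \<in> A"
    then have a: "a \<in> PiE {..<n} (\<lambda>_. UNIV)" using assms sp by auto
    then have "{a} = PiE {..<n} (\<lambda>i. {a i})" by (intro PiE_singleton[symmetric]) (simp add: PiE_iff)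
    also have "\<dots> \<in> sets ?N" unfolding seq_space_def by (intro sets_PiM_I_finite) auto
    finally show "{a} \<in> sets ?N" .
  qed
qed

lemma seq_space_measurable:
  assumes "f \<in> space (seq_space (count_space (UNIV::nat set)) n) \<rightarrow> space N"
  shows "f \<in> seq_space (count_space (UNIV::nat set)) n \<rightarrow>\<^sub>M N"
  using assms by (intro measurableI) (auto intro: seq_space_all_sets)

lemma emeasure_pmf_of_set_real:
  assumes "finite S" "S \<noteq> {}"
  shows "emeasure (measure_pmf (pmf_of_set S)) X = ennreal (real (card (S \<inter> X)) / real (card S))"
proof -
  have c: "card S > 0" using assms by (simp add: card_gt_0_iff)
  show ?thesis using assms c
    by (simp add: emeasure_pmf_of_set ennreal_of_nat_eq_real_of_nat divide_ennreal)
qed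

lemma nn_integral_pmf_of_set_real:
  assumes "finite S" "S \<noteq> {}" "\<And>x. x \<in> S \<Longrightarrow> 0 \<le> r x"
  shows "(\<integral>\<^sup>+x. ennreal (r x) \<partial>measure_pmf (pmf_of_set S)) = ennreal ((\<Sum>x\<in>S. r x) / real (card S))"
proof -
  have c: "card S > 0" using assms by (simp add: card_gt_0_iff)
  have "(\<integral>\<^sup>+x. ennreal (r x) \<partial>measure_pmf (pmf_of_set S)) = (\<Sum>x\<in>S. ennreal (r x)) / of_nat (card S)"
    using assms by (simp add: nn_integral_pmf_of_set)
  also have "\<dots> = ennreal (\<Sum>x\<in>S. r x) / ennreal (real (card S))"
    using assms by (simp add: ennreal_of_nat_eq_real_of_nat)
  also have "\<dots> = ennreal ((\<Sum>x\<in>S. r x) / real (card S))"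
    using assms c by (intro divide_ennreal) (auto intro: sum_nonneg)
  finally show ?thesis .
qed

lemma sum_ennreal_ge:
  fixes r :: "'a \<Rightarrow> real"
  assumes "finite S"
  shows "ennreal (\<Sum>x\<in>S. r x) \<le> (\<Sum>x\<in>S. ennreal (r x))"
proof -
  have "ennreal (\<Sum>x\<in>S. r x) \<le> ennreal (\<Sum>x\<in>S. max 0 (r x))"
    by (intro ennreal_leI sum_mono) auto
  also have "\<dots> = (\<Sum>x\<in>S. ennreal (max 0 (r x)))" by (rule sum_ennreal[symmetric]) auto
  also have "\<dots> = (\<Sum>x\<in>S. ennreal (r x))" by (simp add: ennreal_max_0)
  finally show ?thesis .
qed



definition Hd :: "nat \<Rightarrow> (nat \<Rightarrow> real) set" where
  "Hd d = {(\<lambda>n. if \<theta> (n mod d) \<le> n div d then 1 else 0) | \<theta> :: nat \<Rightarrow> nat. True}"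

definition posi :: "nat \<Rightarrow> nat \<Rightarrow> nat \<Rightarrow> (nat \<Rightarrow> real) \<Rightarrow> (nat \<Rightarrow> nat) \<Rightarrow> nat \<Rightarrow> nat \<Rightarrow> nat" where
  "posi K L T y w i t = mid K (\<lambda>j. maj K L T y w j i) (ep K L t)"

lemma posi_cong:
  assumes "\<And>s. s < t \<Longrightarrow> w' s = w s"
  shows "posi K L T y w' i t = posi K L T y w i t"
  unfolding posi_def by (rule mid_cong) (rule maj_cong[OF _ _ assms], auto)

lemma posn_posi: "posn K L T y w t = posi K L T y w (w t) t"
  unfolding posn_def posi_def by simp

lemma nn_integral_pmf_of_set_real':
  assumes "finite S" "S \<noteq> {}" "\<And>x. x \<in> S \<Longrightarrow> f x = ennreal (r x)" "\<And>x. x \<in> S \<Longrightarrow> 0 \<le> r x"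
  shows "(\<integral>\<^sup>+x. f x \<partial>measure_pmf (pmf_of_set S)) = ennreal ((\<Sum>x\<in>S. r x) / real (card S))"
proof -
  have "(\<integral>\<^sup>+x. f x \<partial>measure_pmf (pmf_of_set S)) = (\<Sum>x\<in>S. f x) / of_nat (card S)"
    using assms by (simp add: nn_integral_pmf_of_set)
  also have "\<dots> = (\<Sum>x\<in>S. ennreal (r x)) / of_nat (card S)" using assms by simp
  also have "\<dots> = (\<integral>\<^sup>+x. ennreal (r x) \<partial>measure_pmf (pmf_of_set S))"
    using assms by (simp add: nn_integral_pmf_of_set)
  also have "\<dots> = ennreal ((\<Sum>x\<in>S. r x) / real (card S))"
    by (rule nn_integral_pmf_of_set_real) (use assms in auto)
  finally show ?thesis .
qed

lemma card_as_sum: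
  assumes "finite W"
  shows "real (card {w\<in>W. Q w}) = (\<Sum>w\<in>W. if Q w then 1 else 0)"
  using assms by (simp add: sum.If_cases Int_def)

lemma part1:
  assumes d1: "1 \<le> d" and K1: "1 \<le> K" and L1: "1 \<le> L" and KL: "K * L \<le> T"
    and phi: "\<phi> \<in> learners"
    and Bt0: "0 \<le> Bt" and BtB: "Bt \<le> real K * real d * ((5/18) * sqrt (real L / d) - 2/(27 * sqrt (real L / d)))"
  shows "\<exists>\<nu>\<in>U_K1 (count_space UNIV) T K. (\<integral>\<^sup>+x. e2ennreal (worst_regret (Hd d) T \<phi> x) \<partial>\<nu>) \<ge> ennreal Bt"
proof -
  let ?M = "count_space (UNIV::nat set)"
  let ?N = "seq_space ?M T"
  let ?W = "PiE {..<T} (\<lambda>_. {..<d})"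
  let ?Y = "PiE {..<T} (\<lambda>_. {0,1::real})"
  have dne: "{..<d} \<noteq> {}"
  proof -
    have "0 \<in> {..<d}" using d1 by simp
    then show ?thesis by blast
  qed
  define path where "path y w s = posn K L T y w s * d + w s" for y w s
  define P where "P t w y = \<phi> t (restrict (path y w) {..t}) (restrict y {..<t})" for t w y
  have P01: "0 \<le> P t w y \<and> P t w y \<le> 1" for t w y
    using phi unfolding learners_def P_def by auto
  have Pdep: "P t w (y(t:=v)) = P t w y" if "t < T" for t w y v
  proof -
    have "restrict (path (y(t:=v)) w) {..t} = restrict (path y w) {..t}"
    proof (intro restrict_ext)
      fix s assume "s \<in> {..t}"
      then have "posn K L T (y(t:=v)) w s = posn K L T y w s" by (intro posn_cong) auto
      then show "path (y(t:=v)) w s = path y w s" unfolding path_def by simp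
    qed
    moreover have "restrict (y(t:=v)) {..<t} = restrict y {..<t}" by (intro restrict_ext) auto
    ultimately show ?thesis unfolding P_def by simp
  qed
  define B where "B = real K * real d * ((5/18) * sqrt (real L / d) - 2/(27 * sqrt (real L / d)))"
  define R where "R w y = (\<Sum>t<T. \<bar>P t w y - y t\<bar>) - (\<Sum>t<T. \<bar>lab K L T y w t - y t\<bar>)" for w y
  have mc: "(\<Sum>w\<in>?W. \<Sum>y\<in>?Y. R w y) \<ge> real (card ?W) * real (card ?Y) * B"
    unfolding R_def B_def by (rule main_comb[OF K1 d1 L1 KL P01 Pdep])
  have fW: "finite ?W" by (simp add: finite_PiE)
  have nW: "?W \<noteq> {}"
  proof -
    have "0 \<in> {..<d}" using d1 by simp
    then show ?thesis by (auto simp: PiE_eq_empty_iff)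
  qed
  have fY: "finite ?Y" by (simp add: finite_PiE)
  have nY: "?Y \<noteq> {}" by (simp add: PiE_eq_empty_iff)
  have "(\<Sum>y\<in>?Y. \<Sum>w\<in>?W. R w y) \<ge> real (card ?Y) * (real (card ?W) * B)"
    using mc by (subst sum.swap) (simp add: mult.commute mult.left_commute)
  then obtain ys where ys: "ys \<in> ?Y" and Rys: "(\<Sum>w\<in>?W. R w ys) \<ge> real (card ?W) * B"
    using exists_ge_avg[OF fY nY] by blast
  define G where "G w = restrict (path ys w) {..<T}" for w
  define pw where "pw = pmf_of_set ?W"
  define \<nu> where "\<nu> = distr (measure_pmf pw) ?N G"
  have spN: "space ?N = PiE {..<T} (\<lambda>_. UNIV)" unfolding seq_space_def space_PiM by simp
  have G_in: "G w \<in> space ?N" for w unfolding spN G_def by simp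
  have Gm: "G \<in> measure_pmf pw \<rightarrow>\<^sub>M ?N" using G_in by simp
  have sets_nu: "sets \<nu> = sets ?N" unfolding \<nu>_def by simp
  have space_nu: "space \<nu> = space ?N" unfolding \<nu>_def by simp
  have path_mod: "path ys w s mod d = w s" "path ys w s div d = posn K L T ys w s" if "w \<in> ?W" "s < T" for w s
  proof -
    have "w s < d" using that by (auto simp: PiE_iff)
    then show "path ys w s mod d = w s" "path ys w s div d = posn K L T ys w s" unfolding path_def by auto
  qed
  define \<theta> where "\<theta> w i = thr K (\<lambda>j. maj K L T ys w j i)" for w i
  have hin: "(\<lambda>n. if \<theta> w (n mod d) \<le> n div d then 1 else 0) \<in> Hd d" for w
    unfolding Hd_def by blast
  have per_w: "e2ennreal (worst_regret (Hd d) T \<phi> (G w)) \<ge> ennreal (R w ys)" if w: "w \<in> ?W" for w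
  proof -
    have le: "e2ennreal (worst_regret (Hd d) T \<phi> (G w)) \<ge> ennreal ((\<Sum>t<T. \<bar>\<phi> t (restrict (G w) {..t}) (restrict ys {..<t}) - ys t\<bar>)
        - (\<Sum>t<T. \<bar>(if \<theta> w (G w t mod d) \<le> G w t div d then 1 else 0) - ys t\<bar>))"
      by (rule worst_ge[OF hin ys])
    have e1: "\<phi> t (restrict (G w) {..t}) (restrict ys {..<t}) = P t w ys" if "t < T" for t
    proof -
      have "{..<T} \<inter> {..t} = {..t}" using that by auto
      then show ?thesis unfolding P_def G_def by simp
    qed
    have e2: "(if \<theta> w (G w t mod d) \<le> G w t div d then 1 else 0) = lab K L T ys w t" if "t < T" for t
      using that path_mod[OF w that] lab_thr[OF K1, of L T ys w t] unfolding G_def \<theta>_def posn_posi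
      by simp
    have "(\<Sum>t<T. \<bar>\<phi> t (restrict (G w) {..t}) (restrict ys {..<t}) - ys t\<bar>)
        - (\<Sum>t<T. \<bar>(if \<theta> w (G w t mod d) \<le> G w t div d then 1 else 0) - ys t\<bar>) = R w ys"
      unfolding R_def using e1 e2 by simp
    then show ?thesis using le by simp
  qed
  have fmeas: "(\<lambda>x. e2ennreal (worst_regret (Hd d) T \<phi> x)) \<in> borel_measurable ?N"
    by (rule seq_space_measurable) simp
  have int_eq: "(\<integral>\<^sup>+x. e2ennreal (worst_regret (Hd d) T \<phi> x) \<partial>\<nu>)
      = (\<Sum>w\<in>?W. e2ennreal (worst_regret (Hd d) T \<phi> (G w))) / of_nat (card ?W)"
  proof -
    have "(\<integral>\<^sup>+x. e2ennreal (worst_regret (Hd d) T \<phi> x) \<partial>\<nu>) = (\<integral>\<^sup>+w. e2ennreal (worst_regret (Hd d) T \<phi> (G w)) \<partial>measure_pmf pw)"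
      unfolding \<nu>_def by (rule nn_integral_distr[OF Gm]) (simp add: fmeas)
    also have "\<dots> = (\<Sum>w\<in>?W. e2ennreal (worst_regret (Hd d) T \<phi> (G w))) / of_nat (card ?W)"
      unfolding pw_def using fW nW by (simp add: nn_integral_pmf_of_set)
    finally show ?thesis .
  qed
  have cW: "real (card ?W) > 0" using fW nW by (simp add: card_gt_0_iff)
  have "ennreal (real (card ?W) * Bt) \<le> ennreal (\<Sum>w\<in>?W. R w ys)"
    using Rys BtB cW unfolding B_def by (intro ennreal_leI) (meson mult_left_mono less_imp_le order_trans)
  also have "\<dots> \<le> (\<Sum>w\<in>?W. ennreal (R w ys))" by (rule sum_ennreal_ge[OF fW])
  also have "\<dots> \<le> (\<Sum>w\<in>?W. e2ennreal (worst_regret (Hd d) T \<phi> (G w)))" by (intro sum_mono per_w)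
  finally have "ennreal (real (card ?W) * Bt) / of_nat (card ?W) \<le> (\<integral>\<^sup>+x. e2ennreal (worst_regret (Hd d) T \<phi> x) \<partial>\<nu>)"
    unfolding int_eq by (rule divide_right_mono_ennreal)
  moreover have "ennreal (real (card ?W) * Bt) / of_nat (card ?W) = ennreal Bt"
    using cW Bt0 by (simp add: ennreal_of_nat_eq_real_of_nat divide_ennreal)
  ultimately have INT: "(\<integral>\<^sup>+x. e2ennreal (worst_regret (Hd d) T \<phi> x) \<partial>\<nu>) \<ge> ennreal Bt" by simp
  have "\<nu> \<in> U_K1 ?M T K"
  proof -
    define pts where "pts t h = (\<lambda>i. posi K L T ys (\<lambda>s. h s mod d) i t * d + i) ` {..<d}" for t h
    define \<kappa> where "\<kappa> t h = measure_pmf (pmf_of_set (pts t h))" for t h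
    have pts_fin: "finite (pts t h)" for t h unfolding pts_def by simp
    have pts_ne: "pts t h \<noteq> {}" for t h unfolding pts_def using dne by auto
    have \<kappa>_in: "\<kappa> t h \<in> space (prob_algebra ?M)" for t h
      unfolding \<kappa>_def space_prob_algebra by (simp add: prob_space_measure_pmf)
    have prob: "prob_space \<nu>" unfolding \<nu>_def by (rule measure_pmf.prob_space_distr[OF Gm])
    have inj_v: "inj_on (\<lambda>i. p i * d + i) {..<d}" for p :: "nat \<Rightarrow> nat"
    proof (rule inj_onI)
      fix i j assume "i \<in> {..<d}" "j \<in> {..<d}" "p i * d + i = p j * d + j"
      then have "(p i * d + i) mod d = (p j * d + j) mod d" by simp
      then show "i = j" using \<open>i \<in> {..<d}\<close> \<open>j \<in> {..<d}\<close> by simp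
    qed
    have CL: "conditional_laws ?M T \<nu> \<kappa>"
      unfolding conditional_laws_def
    proof (intro allI impI conjI ballI)
      fix t assume t: "t < T"
      show "\<kappa> t \<in> seq_space ?M t \<rightarrow>\<^sub>M prob_algebra ?M"
        by (rule seq_space_measurable) (use \<kappa>_in in auto)
      fix A B assume A: "A \<in> sets (seq_space ?M t)" and B: "B \<in> sets ?M"
      define S where "S = {x \<in> space \<nu>. restrict x {..<t} \<in> A \<and> x t \<in> B}"
      have Sset: "S \<in> sets ?N" by (rule seq_space_all_sets) (auto simp: S_def space_nu)
      define v where "v w i = posi K L T ys w i t * d + i" for w i
      define r where "r w = (if restrict (G w) {..<t} \<in> A then real (card {i\<in>{..<d}. v w i \<in> B}) / real d else 0)" for w
      have GS: "G w \<in> S \<longleftrightarrow> restrict (G w) {..<t} \<in> A \<and> G w t \<in> B" for w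
        using G_in[of w] by (simp add: S_def space_nu)
      have ga: "restrict (G (w(t:=i))) {..<t} = restrict (G w) {..<t}" for w i
      proof (intro restrict_ext)
        fix s assume s: "s \<in> {..<t}"
        then have "posn K L T ys (w(t:=i)) s = posn K L T ys w s" by (intro posn_cong) auto
        then show "G (w(t:=i)) s = G w s" using s t unfolding G_def path_def by auto
      qed
      have gb: "G (w(t:=i)) t = v w i" for w i
      proof -
        have "posn K L T ys (w(t:=i)) t = posi K L T ys w i t"
          unfolding posn_posi by (simp, rule posi_cong) auto
        then show ?thesis using t unfolding G_def path_def v_def by simp
      qed
      have real_id: "real (card (?W \<inter> G -` S)) = (\<Sum>w\<in>?W. r w)"
      proof -
        have "real (card (?W \<inter> G -` S)) = real (card {w\<in>?W. G w \<in> S})"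
          by (simp add: Int_def conj_commute)
        also have "\<dots> = (\<Sum>w\<in>?W. if G w \<in> S then 1 else 0)" by (rule card_as_sum[OF fW])
        also have "\<dots> = (\<Sum>w\<in>?W. \<Sum>i\<in>{..<d}. if G (w(t:=i)) \<in> S then 1 else 0) / card {..<d}"
          by (rule rerand) (use t dne in auto)
        also have "\<dots> = (\<Sum>w\<in>?W. r w)"
        proof -
          have "(\<Sum>i\<in>{..<d}. if G (w(t:=i)) \<in> S then 1 else 0) / real d = r w" for w
          proof -
            have "(\<Sum>i\<in>{..<d}. if G (w(t:=i)) \<in> S then 1 else (0::real))
                = (\<Sum>i\<in>{..<d}. if restrict (G w) {..<t} \<in> A \<and> v w i \<in> B then 1 else 0)"
              using GS ga gb by (intro sum.cong) auto
            also have "\<dots> = real (card {i\<in>{..<d}. restrict (G w) {..<t} \<in> A \<and> v w i \<in> B})"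
              by (rule card_as_sum[symmetric]) simp
            finally show ?thesis unfolding r_def by auto
          qed
          then show ?thesis by (simp add: sum_divide_distrib)
        qed
        finally show ?thesis .
      qed
      have r0: "0 \<le> r w" for w unfolding r_def by simp
      have LHS: "emeasure \<nu> S = ennreal ((\<Sum>w\<in>?W. r w) / real (card ?W))"
      proof -
        have "emeasure \<nu> S = emeasure (measure_pmf pw) (G -` S \<inter> space (measure_pmf pw))"
          unfolding \<nu>_def by (rule emeasure_distr[OF Gm Sset])
        also have "\<dots> = ennreal (real (card (?W \<inter> G -` S)) / real (card ?W))"
          unfolding pw_def by (simp add: emeasure_pmf_of_set_real[OF fW nW])
        finally show ?thesis unfolding real_id .
      qed
      define F where "F x = indicator A (restrict x {..<t}) * emeasure (\<kappa> t (restrict x {..<t})) B" for x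
      have Fm: "F \<in> borel_measurable ?N" by (rule seq_space_measurable) simp
      have FG: "F (G w) = ennreal (r w)" if w: "w \<in> ?W" for w
      proof -
        have pe: "pts t (restrict (G w) {..<t}) = v w ` {..<d}"
        proof -
          have "posi K L T ys (\<lambda>s. restrict (G w) {..<t} s mod d) i t = posi K L T ys w i t" for i
          proof (rule posi_cong)
            fix s assume "s < t"
            then show "restrict (G w) {..<t} s mod d = w s" using path_mod[OF w] t unfolding G_def by simp
          qed
          then show ?thesis unfolding pts_def v_def by simp
        qed
        have cv: "card (v w ` {..<d}) = d" using inj_v[of "\<lambda>i. posi K L T ys w i t"]
          unfolding v_def by (simp add: card_image)
        have cvB: "card (v w ` {..<d} \<inter> B) = card {i\<in>{..<d}. v w i \<in> B}"
        proof -
          have "v w ` {..<d} \<inter> B = v w ` {i\<in>{..<d}. v w i \<in> B}" by auto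
          moreover have "inj_on (v w) {i\<in>{..<d}. v w i \<in> B}"
            using inj_v[of "\<lambda>i. posi K L T ys w i t"] unfolding v_def by (rule inj_on_subset) auto
          ultimately show ?thesis by (simp add: card_image)
        qed
        have "emeasure (\<kappa> t (restrict (G w) {..<t})) B = ennreal (real (card {i\<in>{..<d}. v w i \<in> B}) / real d)"
          unfolding \<kappa>_def pe using emeasure_pmf_of_set_real[of "v w ` {..<d}" B] cv cvB dne by auto
        then show ?thesis unfolding F_def r_def by (auto simp: indicator_def)
      qed
      have RHS: "(\<integral>\<^sup>+x. F x \<partial>\<nu>) = ennreal ((\<Sum>w\<in>?W. r w) / real (card ?W))"
      proof -
        have "(\<integral>\<^sup>+x. F x \<partial>\<nu>) = (\<integral>\<^sup>+w. F (G w) \<partial>measure_pmf pw)"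
          unfolding \<nu>_def by (rule nn_integral_distr[OF Gm]) (simp add: Fm)
        also have "\<dots> = ennreal ((\<Sum>w\<in>?W. r w) / real (card ?W))"
          unfolding pw_def by (rule nn_integral_pmf_of_set_real'[OF fW nW FG r0])
        finally show ?thesis .
      qed
      show "emeasure \<nu> {x \<in> space \<nu>. restrict x {..<t} \<in> A \<and> x t \<in> B}
          = (\<integral>\<^sup>+ x. indicator A (restrict x {..<t}) * emeasure (\<kappa> t (restrict x {..<t})) B \<partial>\<nu>)"
        using LHS RHS unfolding S_def F_def by simp
    qed
    have AE: "AE x in \<nu>. card ((\<lambda>t. \<kappa> t (restrict x {..<t})) ` {..<T}) \<le> K"
    proof (rule AE_I2)
      fix x
      define Q where "Q j = measure_pmf (pmf_of_set ((\<lambda>i. mid K (\<lambda>j'. maj K L T ys (\<lambda>s. x s mod d) j' i) j * d + i) ` {..<d}))" for j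
      have "\<kappa> t (restrict x {..<t}) = Q (ep K L t)" for t
      proof -
        have "posi K L T ys (\<lambda>s. restrict x {..<t} s mod d) i t = posi K L T ys (\<lambda>s. x s mod d) i t" for i
          by (rule posi_cong) simp
        then show ?thesis unfolding \<kappa>_def pts_def Q_def posi_def by simp
      qed
      then have "(\<lambda>t. \<kappa> t (restrict x {..<t})) ` {..<T} \<subseteq> Q ` {..<K}"
        using ep_lt[OF K1] by auto
      then have "card ((\<lambda>t. \<kappa> t (restrict x {..<t})) ` {..<T}) \<le> card (Q ` {..<K})"
        by (intro card_mono) auto
      also have "\<dots> \<le> K" using card_image_le[of "{..<K}" Q] by simp
      finally show "card ((\<lambda>t. \<kappa> t (restrict x {..<t})) ` {..<T}) \<le> K" .
    qed
    show ?thesis unfolding U_K1_def using prob sets_nu CL AE by auto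
  qed
  then show ?thesis using INT by blast
qed



lemma num1:
  fixes d K T :: nat
  assumes d1: "1 \<le> d" and K1: "1 \<le> K" and cond: "8 * real K * real d * ln (2 * real K * real d) \<le> real T"
  shows "1 \<le> T div K \<and> K * (T div K) \<le> T \<and>
    sqrt (real K * real d * real T / 64) \<le> real K * real d * ((5/18) * sqrt (real (T div K) / d) - 2/(27 * sqrt (real (T div K) / d)))"
proof -
  define L where "L = T div K"
  have Kp: "real K \<ge> 1" "real d \<ge> 1" using K1 d1 by auto
  have kd: "1 \<le> real K * real d" using mult_mono[of 1 "real K" 1 "real d"] Kp by simp
  have "ln 2 \<le> ln (2 * real K * real d)"
    using kd by (subst ln_le_cancel_iff) auto
  then have ln2: "ln (2 * real K * real d) \<ge> 2/3" using ln2_ge_two_thirds by linarith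
  have "8 * real K * real d * (2/3) \<le> 8 * real K * real d * ln (2 * real K * real d)"
    using ln2 Kp by (intro mult_left_mono) auto
  then have T1: "real T \<ge> (16/3) * real K * real d" using cond by linarith
  have e: "T = K * L + T mod K" unfolding L_def by simp
  have "T mod K < K" using K1 by simp
  then have "T < K * L + K" using e by linarith
  then have "real T < real K * real L + real K" by (metis of_nat_add of_nat_less_iff of_nat_mult)
  then have LK: "real K * real L > real T - real K" by linarith
  have "real K * ((16/3) * real d) \<le> real K * (real L + 1)" using T1 LK by (simp add: algebra_simps)
  then have "(16/3) * real d \<le> real L + 1" using Kp by (simp add: mult_le_cancel_left_pos)
  then have Ld: "real L \<ge> (13/3) * real d" using Kp by linarith
  then have "real L > 0" using Kp by linarith
  then have L1: "1 \<le> L" by simp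
  have KL: "K * L \<le> T" unfolding L_def by (simp add: mult.commute)
  define m where "m = real L / real d"
  have m4: "m \<ge> 4" unfolding m_def using Ld Kp by (simp add: field_simps)
  define s where "s = sqrt m"
  have s2: "s \<ge> 2" unfolding s_def using m4 real_le_rsqrt[of 2 m] by (simp add: power2_eq_square)
  have ssm: "s * s = m" unfolding s_def using m4 by simp
  have a1: "2/(27 * s) \<le> 2/(27 * 2)" using s2 by (intro divide_left_mono) auto
  have a2: "(2::real)/(27 * 2) \<le> s / 54" using s2 by linarith
  have "2/(27 * s) \<le> s / 54" using a1 a2 by linarith
  then have A: "(5/18) * s - 2/(27 * s) \<ge> (7/27) * s" by simp
  define C where "C = real K * real d * ((7/27) * s)"
  have C0: "C \<ge> 0" unfolding C_def using s2 by simp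
  have "real K \<le> real K * real d" using Kp by simp
  then have "real K \<le> (3/16) * real T" using T1 by linarith
  then have KLT: "real K * real L \<ge> (13/16) * real T" using LK by linarith
  have "C^2 = (49/729) * (real K * real d) * (real K * real L)"
    unfolding C_def power2_eq_square using ssm Kp unfolding m_def by (simp add: field_simps)
  also have "\<dots> \<ge> (49/729) * (real K * real d) * ((13/16) * real T)"
    using KLT Kp by (intro mult_left_mono) auto
  finally have C2: "C^2 \<ge> (49/729) * (real K * real d) * ((13/16) * real T)" .
  have X0: "0 \<le> real K * real d * real T" by simp
  have "(49/729) * (real K * real d) * ((13/16) * real T) = (637/11664) * (real K * real d * real T)"
    by (simp add: algebra_simps)
  then have "C^2 \<ge> real K * real d * real T / 64" using C2 X0 by linarith
  then have "sqrt (real K * real d * real T / 64) \<le> C" using C0 by (intro real_le_lsqrt) auto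
  also have "C \<le> real K * real d * ((5/18) * s - 2/(27 * s))"
    unfolding C_def using A Kp by (intro mult_left_mono) auto
  finally show ?thesis using L1 KL unfolding L_def[symmetric] s_def m_def by simp
qed

lemma Hd_binary: "binary_class UNIV (Hd d)"
  unfolding binary_class_def Hd_def by auto

lemma Hd_VC:
  assumes d1: "1 \<le> d"
  shows "VC_le UNIV (Hd d) d"
  unfolding VC_le_def
proof (intro allI impI)
  fix S :: "nat set" assume "S \<subseteq> UNIV \<and> finite S \<and> shatters (Hd d) S"
  then have fS: "finite S" and sh: "shatters (Hd d) S" by auto
  have inj: "inj_on (\<lambda>n. n mod d) S"
  proof (rule inj_onI, rule ccontr)
    fix a b assume a: "a \<in> S" and b: "b \<in> S" and mab: "a mod d = b mod d" and ne: "a \<noteq> b"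
    have dd: "a div d \<noteq> b div d"
      using mab ne by (metis div_mult_mod_eq)
    have key: "False" if x: "x \<in> S" and z: "z \<in> S" and mxz: "x mod d = z mod d" and lt: "x div d < z div d" for x z
    proof -
      have "{x} \<subseteq> S" using x by simp
      then obtain h where h: "h \<in> Hd d" and hx: "\<forall>u\<in>S. (h u = 1 \<longleftrightarrow> u \<in> {x})"
        using sh unfolding shatters_def by blast
      obtain \<theta> where th: "h = (\<lambda>n. if \<theta> (n mod d) \<le> n div d then 1 else 0)" using h unfolding Hd_def by blast
      have "h x = 1" using hx x by simp
      then have "\<theta> (x mod d) \<le> x div d" unfolding th by (simp split: if_splits)
      then have "\<theta> (z mod d) \<le> z div d" using mxz lt by simp
      then have "h z = 1" unfolding th by simp
      moreover have "z \<noteq> x" using lt by auto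
      ultimately show False using hx z by simp
    qed
    show False
    proof (cases "a div d < b div d")
      case True then show ?thesis using key[OF a b mab] by simp
    next
      case False then have "b div d < a div d" using dd by simp
      then show ?thesis using key[OF b a mab[symmetric]] by simp
    qed
  qed
  have "(\<lambda>n. n mod d) ` S \<subseteq> {..<d}" using d1 by auto
  then have "card ((\<lambda>n. n mod d) ` S) \<le> d" using card_mono[of "{..<d}"] by fastforce
  then show "card S \<le> d" using card_image[OF inj] by simp
qed

theorem theorem8:
  shows "(\<forall>d K T :: nat. 1 \<le> d \<and> 1 \<le> K \<and> 8 * real K * real d * ln (2 * real K * real d) \<le> real T \<longrightarrow>
            (\<exists>(X :: nat set) (H :: (nat \<Rightarrow> real) set).
               binary_class X H \<and> VC_le X H d \<and>
               minimax_regret (count_space X) H T K \<ge> ennreal (sqrt (real K * real d * real T / 64))))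
       \<and> (\<exists>c::real. c > 0 \<and>
            (\<forall>K T :: nat. 1 \<le> K \<and> K \<le> T \<longrightarrow>
               minimax_regret (restrict_space borel {0..1::real}) threshold_class T K
                 \<ge> ennreal (c * sqrt (real K * real T))))"
proof (intro conjI allI impI)
  fix d K T :: nat
  assume as: "1 \<le> d \<and> 1 \<le> K \<and> 8 * real K * real d * ln (2 * real K * real d) \<le> real T"
  then have d1: "1 \<le> d" and K1: "1 \<le> K" and cond: "8 * real K * real d * ln (2 * real K * real d) \<le> real T" by auto
  note n = num1[OF d1 K1 cond]
  have "minimax_regret (count_space UNIV) (Hd d) T K \<ge> ennreal (sqrt (real K * real d * real T / 64))"
    unfolding minimax_regret_def
  proof (rule INF_greatest)
    fix \<phi> :: "nat \<Rightarrow> (nat \<Rightarrow> nat) \<Rightarrow> (nat \<Rightarrow> real) \<Rightarrow> real" assume phi: "\<phi> \<in> learners"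
    have ex: "\<exists>\<nu>\<in>U_K1 (count_space UNIV) T K. (\<integral>\<^sup>+x. e2ennreal (worst_regret (Hd d) T \<phi> x) \<partial>\<nu>) \<ge> ennreal (sqrt (real K * real d * real T / 64))"
      by (rule part1[where L="T div K"]) (use d1 K1 phi n in auto)
    then obtain \<nu> where nu: "\<nu> \<in> U_K1 (count_space UNIV) T K"
      and I: "(\<integral>\<^sup>+x. e2ennreal (worst_regret (Hd d) T \<phi> x) \<partial>\<nu>) \<ge> ennreal (sqrt (real K * real d * real T / 64))"
      by blast
    show "ennreal (sqrt (real K * real d * real T / 64)) \<le> (SUP \<nu>\<in>U_K1 (count_space UNIV) T K. \<integral>\<^sup>+x. e2ennreal (worst_regret (Hd d) T \<phi> x) \<partial>\<nu>)"
      using I nu by (meson SUP_upper order_trans)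
  qed
  then show "\<exists>(X :: nat set) (H :: (nat \<Rightarrow> real) set).
               binary_class X H \<and> VC_le X H d \<and>
               minimax_regret (count_space X) H T K \<ge> ennreal (sqrt (real K * real d * real T / 64))"
    using Hd_binary Hd_VC[OF d1] by blast
next
  show "\<exists>c::real. c > 0 \<and>
            (\<forall>K T :: nat. 1 \<le> K \<and> K \<le> T \<longrightarrow>
               minimax_regret (restrict_space borel {0..1::real}) threshold_class T K
                 \<ge> ennreal (c * sqrt (real K * real T)))"
  proof (intro exI[of _ "1/8"] conjI allI impI)
    fix K T :: nat assume "1 \<le> K \<and> K \<le> T"
    then have K1: "1 \<le> K" and KT: "K \<le> T" by auto
    show "minimax_regret (restrict_space borel {0..1::real}) threshold_class T K \<ge> ennreal ((1/8) * sqrt (real K * real T))"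
      unfolding minimax_regret_def
      by (rule INF_greatest) (rule part2[OF K1 KT])
  qed simp
qed



end
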